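(* Let $X$ and $Y$ be compact Hausdorff spaces, and let $E\subseteq C(X)$ and $F\subseteq C(Y)$ be Riesz subspaces, dense for the supremum norm, containing the respective constant functions. Let $G_1,G_2$ be Archimedean Riesz spaces and $\phi_i:E\times F\to G_i$ ($i=1,2$) be bi-injective Riesz bimorphisms. For $i=1,2$ let $E\overline{\otimes}_{\phi_i}F$ denote the Riesz subspace of $G_i$ generated by $\phi_i(E\times F)$. Then there is a unique Riesz isomorphism $T:E\overline{\otimes}_{\phi_1}F\to E\overline{\otimes}_{\phi_2}F$ such that $T\circ\phi_1=\phi_2$.
   Context: A linear map $T$ between Riesz spaces is a Riesz homomorphism if $T(x\vee y)=Tx\vee Ty$; a Riesz isomorphism is a bijective Riesz homomorphism. A bilinear map $\phi:E\times F\to G$ is a Riesz bimorphism if $\phi(\cdot,y)$ is a Riesz homomorphism for every $y\in F_+$ and $\phi(x,\cdot)$ is a Riesz homomorphism for every $x\in E_+$. $\phi$ is bi-injective if $\phi(x,y)=0$ implies $x=0$ or $y=0$. *)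

theory Defs
  imports "HOL-Analysis.Analysis"
begin

definition Cfun :: "'a topology \<Rightarrow> ('a \<Rightarrow> real) set" where
  "Cfun X = {f. continuous_map X euclideanreal f \<and> (\<forall>x. x \<notin> topspace X \<longrightarrow> f x = 0)}"

definition const_on :: "'a topology \<Rightarrow> real \<Rightarrow> ('a \<Rightarrow> real)" where
  "const_on X c = (\<lambda>x. if x \<in> topspace X then c else 0)"

definition riesz_subspace_C :: "'a topology \<Rightarrow> ('a \<Rightarrow> real) set \<Rightarrow> bool" where
  "riesz_subspace_C X E \<longleftrightarrow> E \<subseteq> Cfun X \<and> (\<lambda>x. 0) \<in> E \<and>
     (\<forall>f\<in>E. \<forall>g\<in>E. (\<lambda>x. f x + g x) \<in> E) \<and>
     (\<forall>c. \<forall>f\<in>E. (\<lambda>x. c * f x) \<in> E) \<and>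
     (\<forall>f\<in>E. \<forall>g\<in>E. (\<lambda>x. max (f x) (g x)) \<in> E)"

definition sup_dense_C :: "'a topology \<Rightarrow> ('a \<Rightarrow> real) set \<Rightarrow> bool" where
  "sup_dense_C X E \<longleftrightarrow> (\<forall>f\<in>Cfun X. \<forall>\<epsilon>>0. \<exists>g\<in>E. \<forall>x\<in>topspace X. \<bar>f x - g x\<bar> < \<epsilon>)"

definition archimedean_riesz :: "'g::{ordered_real_vector,lattice} itself \<Rightarrow> bool" where
  "archimedean_riesz _ \<longleftrightarrow>
     (\<forall>x y::'g. 0 \<le> x \<and> (\<forall>n::nat. real n *\<^sub>R x \<le> y) \<longrightarrow> x = 0)"

definition riesz_subspace :: "'g::{ordered_real_vector,lattice} set \<Rightarrow> bool" where
  "riesz_subspace S \<longleftrightarrow> 0 \<in> S \<and> (\<forall>x\<in>S. \<forall>y\<in>S. x + y \<in> S) \<and>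
     (\<forall>c. \<forall>x\<in>S. c *\<^sub>R x \<in> S) \<and> (\<forall>x\<in>S. \<forall>y\<in>S. sup x y \<in> S)"

definition riesz_span :: "'g::{ordered_real_vector,lattice} set \<Rightarrow> 'g set" where
  "riesz_span A = \<Inter>{S. riesz_subspace S \<and> A \<subseteq> S}"

definition riesz_hom_on :: "'g::{ordered_real_vector,lattice} set \<Rightarrow> ('g \<Rightarrow> 'h::{ordered_real_vector,lattice}) \<Rightarrow> bool" where
  "riesz_hom_on S T \<longleftrightarrow> (\<forall>x\<in>S. \<forall>y\<in>S. T (x + y) = T x + T y) \<and>
     (\<forall>c. \<forall>x\<in>S. T (c *\<^sub>R x) = c *\<^sub>R T x) \<and>
     (\<forall>x\<in>S. \<forall>y\<in>S. T (sup x y) = sup (T x) (T y))"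

definition riesz_iso_on :: "'g::{ordered_real_vector,lattice} set \<Rightarrow> 'h::{ordered_real_vector,lattice} set \<Rightarrow> ('g \<Rightarrow> 'h) \<Rightarrow> bool" where
  "riesz_iso_on S S' T \<longleftrightarrow> riesz_hom_on S T \<and> bij_betw T S S'"

definition riesz_bimorphism ::
  "('a \<Rightarrow> real) set \<Rightarrow> ('b \<Rightarrow> real) set \<Rightarrow> (('a \<Rightarrow> real) \<Rightarrow> ('b \<Rightarrow> real) \<Rightarrow> 'g::{ordered_real_vector,lattice}) \<Rightarrow> bool" where
  "riesz_bimorphism E F \<phi> \<longleftrightarrow>
     (\<forall>y\<in>F. (\<forall>f\<in>E. \<forall>g\<in>E. \<phi> (\<lambda>t. f t + g t) y = \<phi> f y + \<phi> g y) \<and>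
             (\<forall>c. \<forall>f\<in>E. \<phi> (\<lambda>t. c * f t) y = c *\<^sub>R \<phi> f y)) \<and>
     (\<forall>x\<in>E. (\<forall>f\<in>F. \<forall>g\<in>F. \<phi> x (\<lambda>t. f t + g t) = \<phi> x f + \<phi> x g) \<and>
             (\<forall>c. \<forall>f\<in>F. \<phi> x (\<lambda>t. c * f t) = c *\<^sub>R \<phi> x f)) \<and>
     (\<forall>y\<in>F. (\<forall>t. 0 \<le> y t) \<longrightarrow>
        (\<forall>f\<in>E. \<forall>g\<in>E. \<phi> (\<lambda>t. max (f t) (g t)) y = sup (\<phi> f y) (\<phi> g y))) \<and>
     (\<forall>x\<in>E. (\<forall>t. 0 \<le> x t) \<longrightarrow>
        (\<forall>f\<in>F. \<forall>g\<in>F. \<phi> x (\<lambda>t. max (f t) (g t)) = sup (\<phi> x f) (\<phi> x g)))"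

definition bi_injective ::
  "('a \<Rightarrow> real) set \<Rightarrow> ('b \<Rightarrow> real) set \<Rightarrow> (('a \<Rightarrow> real) \<Rightarrow> ('b \<Rightarrow> real) \<Rightarrow> 'g::{ordered_real_vector,lattice}) \<Rightarrow> bool" where
  "bi_injective E F \<phi> \<longleftrightarrow>
     (\<forall>x\<in>E. \<forall>y\<in>F. \<phi> x y = 0 \<longrightarrow> x = (\<lambda>t. 0) \<or> y = (\<lambda>t. 0))"

end

theory Submission
  imports Defs
begin


definition rabs :: "'g::{ordered_real_vector,lattice} \<Rightarrow> 'g" where
  "rabs v = sup v (- v)"

lemma add_sup_right: "sup a b + (c::'g::{ordered_real_vector,lattice}) = sup (a + c) (b + c)"
proof (rule antisym)
  show "sup (a + c) (b + c) \<le> sup a b + c" by (simp add: add_right_mono)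
  have "a \<le> sup (a + c) (b + c) - c" "b \<le> sup (a + c) (b + c) - c"
    by (simp_all add: le_diff_eq)
  hence "sup a b \<le> sup (a + c) (b + c) - c" by simp
  thus "sup a b + c \<le> sup (a + c) (b + c)" by (simp add: le_diff_eq)
qed

lemma add_inf_right: "inf a b + (c::'g::{ordered_real_vector,lattice}) = inf (a + c) (b + c)"
proof (rule antisym)
  show "inf a b + c \<le> inf (a + c) (b + c)" by (simp add: add_right_mono)
  have "inf (a + c) (b + c) - c \<le> a" "inf (a + c) (b + c) - c \<le> b"
    by (simp_all add: diff_le_eq)
  hence "inf (a + c) (b + c) - c \<le> inf a b" by simp
  thus "inf (a + c) (b + c) \<le> inf a b + c" by (metis diff_le_eq add.commute)
qed

lemma neg_sup: "- sup a (b::'g::{ordered_real_vector,lattice}) = inf (- a) (- b)"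
proof (rule antisym)
  show "- sup a b \<le> inf (- a) (- b)" by simp
  have "a \<le> - inf (- a) (- b)" by (metis le_minus_iff inf_le1)
  moreover have "b \<le> - inf (- a) (- b)" by (metis le_minus_iff inf_le2)
  ultimately have "sup a b \<le> - inf (- a) (- b)" by simp
  thus "inf (- a) (- b) \<le> - sup a b" by (simp add: le_minus_iff)
qed

lemma inf_eq_sum_sup: "inf a (b::'g::{ordered_real_vector,lattice}) = a + b - sup a b"
proof -
  have "a + b - sup a b = a + b + inf (- a) (- b)" by (simp add: neg_sup[symmetric])
  also have "\<dots> = inf (- a) (- b) + (a + b)" by (simp add: add.commute)
  also have "\<dots> = inf (- a + (a + b)) (- b + (a + b))" by (rule add_inf_right)
  also have "\<dots> = inf b a" by (simp add: algebra_simps)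
  finally show ?thesis by (simp add: inf_commute)
qed

lemma pos_inf_add_le:
  fixes a b c :: "'g::{ordered_real_vector,lattice}"
  assumes "0 \<le> a" "0 \<le> b" "0 \<le> c"
  shows "inf (a + b) c \<le> inf a c + inf b c"
proof -
  have "inf a c + inf b c = inf (a + inf b c) (c + inf b c)" by (rule add_inf_right)
  also have "a + inf b c = inf (a + b) (a + c)"
    using add_inf_right[of b c a] by (simp add: add.commute)
  also have "c + inf b c = inf (c + b) (c + c)"
    using add_inf_right[of b c c] by (simp add: add.commute)
  finally have eq: "inf a c + inf b c = inf (inf (a + b) (a + c)) (inf (c + b) (c + c))" .
  have "inf (a + b) c \<le> inf (inf (a + b) (a + c)) (inf (c + b) (c + c))"
  proof (intro le_infI)
    show "inf (a + b) c \<le> a + b" by simp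
    show "inf (a + b) c \<le> a + c" using assms by (meson add_increasing inf.coboundedI2 order.refl)
    show "inf (a + b) c \<le> c + b" using assms by (meson add_increasing2 inf.coboundedI2 order.refl)
    show "inf (a + b) c \<le> c + c" using assms by (meson add_increasing2 inf.coboundedI2 order.refl)
  qed
  thus ?thesis using eq by simp
qed

lemma pos_inf_sum_le:
  fixes a :: "'i \<Rightarrow> 'g::{ordered_real_vector,lattice}"
  assumes "finite I" "\<forall>i\<in>I. 0 \<le> a i" "0 \<le> c"
  shows "inf (\<Sum>i\<in>I. a i) c \<le> (\<Sum>i\<in>I. inf (a i) c)"
  using assms
proof (induction I rule: finite_induct)
  case empty
  then show ?case by simp
next
  case (insert j I)
  have "inf (\<Sum>i\<in>insert j I. a i) c = inf (a j + (\<Sum>i\<in>I. a i)) c"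
    using insert by simp
  also have "\<dots> \<le> inf (a j) c + inf (\<Sum>i\<in>I. a i) c"
    using insert by (intro pos_inf_add_le) (auto intro: sum_nonneg)
  also have "\<dots> \<le> inf (a j) c + (\<Sum>i\<in>I. inf (a i) c)"
    using insert by (intro add_left_mono) auto
  finally show ?case using insert by simp
qed

lemma disj_pos_part:
  fixes P N :: "'g::{ordered_real_vector,lattice}"
  assumes "inf P N = 0"
  shows "sup (P - N) 0 = P"
proof -
  have "sup (P - N) 0 = sup P N - N" using add_sup_right[of P N "- N"] by simp
  also have "sup P N = P + N - inf P N" by (simp add: inf_eq_sum_sup)
  finally show ?thesis using assms by simp
qed

lemma rabs_ge: "v \<le> rabs (v::'g::{ordered_real_vector,lattice})" "- v \<le> rabs v"
  by (simp_all add: rabs_def)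

lemma rabs_le_iff: "rabs (v::'g::{ordered_real_vector,lattice}) \<le> d \<longleftrightarrow> v \<le> d \<and> - v \<le> d"
  by (simp add: rabs_def)

lemma rabs_nonneg: "0 \<le> rabs (v::'g::{ordered_real_vector,lattice})"
proof -
  have "v + - v \<le> rabs v + rabs v" by (intro add_mono rabs_ge)
  hence "0 \<le> rabs v + rabs v" by simp
  hence "0 \<le> (1/2::real) *\<^sub>R (rabs v + rabs v)" by (intro scaleR_nonneg_nonneg) auto
  also have "(1/2::real) *\<^sub>R (rabs v + rabs v) = (1/2::real) *\<^sub>R (2 *\<^sub>R rabs v)"
    by (simp add: scaleR_2)
  also have "\<dots> = rabs v" by simp
  finally show ?thesis .
qed

lemma rabs_add_le: "rabs ((a::'g::{ordered_real_vector,lattice}) + b) \<le> rabs a + rabs b"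
proof -
  have "- a + - b \<le> rabs a + rabs b" using rabs_ge[of a] rabs_ge[of b] by (intro add_mono)
  moreover have "a + b \<le> rabs a + rabs b" using rabs_ge[of a] rabs_ge[of b] by (intro add_mono)
  ultimately show ?thesis unfolding rabs_le_iff by (simp add: add.commute)
qed

lemma rabs_scale_le: "rabs (c *\<^sub>R (v::'g::{ordered_real_vector,lattice})) \<le> \<bar>c\<bar> *\<^sub>R rabs v"
proof -
  have "c *\<^sub>R v = \<bar>c\<bar> *\<^sub>R v \<or> c *\<^sub>R v = \<bar>c\<bar> *\<^sub>R (- v)" by (cases "0 \<le> c") auto
  moreover have "- (c *\<^sub>R v) = \<bar>c\<bar> *\<^sub>R v \<or> - (c *\<^sub>R v) = \<bar>c\<bar> *\<^sub>R (- v)" by (cases "0 \<le> c") auto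
  moreover have "\<bar>c\<bar> *\<^sub>R v \<le> \<bar>c\<bar> *\<^sub>R rabs v"
    by (rule scaleR_left_mono) (simp_all add: rabs_ge)
  moreover have "\<bar>c\<bar> *\<^sub>R (- v) \<le> \<bar>c\<bar> *\<^sub>R rabs v"
    by (rule scaleR_left_mono) (simp_all add: rabs_ge)
  moreover have "\<bar>c\<bar> *\<^sub>R (- v) = - (\<bar>c\<bar> *\<^sub>R v)" by simp
  ultimately show ?thesis unfolding rabs_le_iff by metis
qed

lemma sup_diff_le:
  fixes a b a' b' d :: "'g::{ordered_real_vector,lattice}"
  assumes "rabs (a - a') \<le> d" "rabs (b - b') \<le> d"
  shows "sup a b - sup a' b' \<le> d"
proof -
  have "a - a' \<le> d" "b - b' \<le> d" using assms rabs_ge[of "a - a'"] rabs_ge[of "b - b'"]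
    by (auto intro: order_trans)
  hence "a \<le> a' + d" "b \<le> b' + d" by (simp_all add: diff_le_eq add.commute)
  hence "sup a b \<le> sup a' b' + d" by (meson add_right_mono order_trans sup.cobounded1 sup.cobounded2 sup_least)
  thus ?thesis by (simp add: diff_le_eq add.commute)
qed

lemma rabs_sup_le:
  fixes a b a' b' :: "'g::{ordered_real_vector,lattice}"
  shows "rabs (sup a b - sup a' b') \<le> rabs (a - a') + rabs (b - b')"
proof -
  have n: "0 \<le> rabs (a - a')" "0 \<le> rabs (b - b')" by (simp_all add: rabs_nonneg)
  have r1: "rabs (a - a') \<le> rabs (a - a') + rabs (b - b')" "rabs (b - b') \<le> rabs (a - a') + rabs (b - b')"
    using n by (simp_all add: add_increasing2 add_increasing)
  have "rabs (a' - a) = rabs (a - a')" "rabs (b' - b) = rabs (b - b')"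
    by (simp_all add: rabs_def minus_diff_eq sup_commute)
  hence r2: "rabs (a' - a) \<le> rabs (a - a') + rabs (b - b')" "rabs (b' - b) \<le> rabs (a - a') + rabs (b - b')"
    using r1 by simp_all
  show ?thesis unfolding rabs_le_iff
    using sup_diff_le[OF r1] sup_diff_le[OF r2] by (simp add: minus_diff_eq)
qed


datatype ('x, 'y) tm = Gen 'x 'y | Add "('x, 'y) tm" "('x, 'y) tm" | Scl real "('x, 'y) tm"
  | Sup "('x, 'y) tm" "('x, 'y) tm"

primrec ev :: "('x \<Rightarrow> 'y \<Rightarrow> 'g::{ordered_real_vector,lattice}) \<Rightarrow> ('x, 'y) tm \<Rightarrow> 'g" where
  "ev f (Gen x y) = f x y"
| "ev f (Add p q) = ev f p + ev f q"
| "ev f (Scl c p) = c *\<^sub>R ev f p"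
| "ev f (Sup p q) = sup (ev f p) (ev f q)"

primrec gens :: "('x, 'y) tm \<Rightarrow> ('x \<times> 'y) set" where
  "gens (Gen x y) = {(x, y)}"
| "gens (Add p q) = gens p \<union> gens q"
| "gens (Scl c p) = gens p"
| "gens (Sup p q) = gens p \<union> gens q"

primrec lip :: "('x, 'y) tm \<Rightarrow> real" where
  "lip (Gen x y) = 1"
| "lip (Add p q) = lip p + lip q"
| "lip (Scl c p) = \<bar>c\<bar> * lip p"
| "lip (Sup p q) = lip p + lip q"

lemma lip_nonneg: "0 \<le> lip t"
  by (induction t) auto

lemma finite_gens: "finite (gens t)"
  by (induction t) auto

lemma ev_cong: "(\<forall>(x, y)\<in>gens t. f x y = f' x y) \<Longrightarrow> ev f t = ev f' t"
  by (induction t) auto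

lemma ev_lip:
  fixes f f' :: "'x \<Rightarrow> 'y \<Rightarrow> 'g::{ordered_real_vector,lattice}"
  assumes "\<forall>(x, y)\<in>gens t. rabs (f x y - f' x y) \<le> D"
  shows "rabs (ev f t - ev f' t) \<le> lip t *\<^sub>R D"
  using assms
proof (induction t)
  case (Gen x y)
  then show ?case by simp
next
  case (Add p q)
  have "rabs (ev f (Add p q) - ev f' (Add p q)) = rabs ((ev f p - ev f' p) + (ev f q - ev f' q))"
    by (simp add: algebra_simps)
  also have "\<dots> \<le> rabs (ev f p - ev f' p) + rabs (ev f q - ev f' q)" by (rule rabs_add_le)
  also have "\<dots> \<le> lip p *\<^sub>R D + lip q *\<^sub>R D" using Add by (intro add_mono) auto
  finally show ?case by (simp add: scaleR_add_left)
next
  case (Scl c p)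
  have "rabs (ev f (Scl c p) - ev f' (Scl c p)) = rabs (c *\<^sub>R (ev f p - ev f' p))"
    by (simp add: algebra_simps)
  also have "\<dots> \<le> \<bar>c\<bar> *\<^sub>R rabs (ev f p - ev f' p)" by (rule rabs_scale_le)
  also have "\<dots> \<le> \<bar>c\<bar> *\<^sub>R (lip p *\<^sub>R D)" using Scl by (intro scaleR_left_mono) auto
  finally show ?case by simp
next
  case (Sup p q)
  have "rabs (ev f (Sup p q) - ev f' (Sup p q)) \<le> rabs (ev f p - ev f' p) + rabs (ev f q - ev f' q)"
    by (simp add: rabs_sup_le)
  also have "\<dots> \<le> lip p *\<^sub>R D + lip q *\<^sub>R D" using Sup by (intro add_mono) auto
  finally show ?case by (simp add: scaleR_add_left)
qed

lemma ev_lip_lower: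
  fixes f f' :: "'x \<Rightarrow> 'y \<Rightarrow> 'g::{ordered_real_vector,lattice}"
  assumes "\<forall>(x, y)\<in>gens t. rabs (f x y - f' x y) \<le> D"
  shows "ev f' t - lip t *\<^sub>R D \<le> ev f t"
proof -
  have "- (ev f t - ev f' t) \<le> lip t *\<^sub>R D"
    using ev_lip[OF assms] rabs_ge(2)[of "ev f t - ev f' t"] by (rule order_trans[rotated])
  thus ?thesis by (simp add: algebra_simps)
qed

lemma ev_hom:
  assumes S: "riesz_subspace S" and T: "riesz_hom_on S T"
    and g: "\<forall>(x, y)\<in>gens t. f x y \<in> S"
  shows "ev f t \<in> S \<and> T (ev f t) = ev (\<lambda>x y. T (f x y)) t"
  using g
proof (induction t)
  case (Gen x y) then show ?case by simp
next
  case (Add p q) then show ?case using S T by (simp add: riesz_subspace_def riesz_hom_on_def)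
next
  case (Scl c p) then show ?case using S T by (simp add: riesz_subspace_def riesz_hom_on_def)
next
  case (Sup p q) then show ?case using S T by (simp add: riesz_subspace_def riesz_hom_on_def)
qed

lemma ev_in_subspace:
  assumes S: "riesz_subspace S" and g: "\<forall>(x, y)\<in>gens t. f x y \<in> S"
  shows "ev f t \<in> S"
  using g
proof (induction t)
  case (Gen x y) then show ?case by simp
next
  case (Add p q) then show ?case using S by (simp add: riesz_subspace_def)
next
  case (Scl c p) then show ?case using S by (simp add: riesz_subspace_def)
next
  case (Sup p q) then show ?case using S by (simp add: riesz_subspace_def)
qed

lemma riesz_span_eq:
  fixes \<phi> :: "'x \<Rightarrow> 'y \<Rightarrow> 'g::{ordered_real_vector,lattice}"
  assumes "x0 \<in> A" "y0 \<in> B"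
  shows "riesz_span ((\<lambda>(x, y). \<phi> x y) ` (A \<times> B)) = {ev \<phi> t | t. gens t \<subseteq> A \<times> B}"
proof
  let ?V = "{ev \<phi> t | t. gens t \<subseteq> A \<times> B}"
  have "riesz_subspace ?V"
    unfolding riesz_subspace_def
  proof (intro conjI ballI allI)
    show "0 \<in> ?V"
      by (rule CollectI, rule exI[of _ "Scl 0 (Gen x0 y0)"]) (use assms in auto)
  next
    fix u v assume "u \<in> ?V" "v \<in> ?V"
    then obtain p q where "u = ev \<phi> p" "gens p \<subseteq> A \<times> B" "v = ev \<phi> q" "gens q \<subseteq> A \<times> B" by blast
    then show "u + v \<in> ?V" by (auto intro!: exI[of _ "Add p q"])
    show "sup u v \<in> ?V" using \<open>u = _\<close> \<open>v = _\<close> \<open>gens p \<subseteq> _\<close> \<open>gens q \<subseteq> _\<close>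
      by (auto intro!: exI[of _ "Sup p q"])
  next
    fix c u assume "u \<in> ?V"
    then obtain p where "u = ev \<phi> p" "gens p \<subseteq> A \<times> B" by blast
    then show "c *\<^sub>R u \<in> ?V" by (auto intro!: exI[of _ "Scl c p"])
  qed
  moreover have "(\<lambda>(x, y). \<phi> x y) ` (A \<times> B) \<subseteq> ?V"
    by (auto intro!: exI[of _ "Gen _ _"])
  ultimately show "riesz_span ((\<lambda>(x, y). \<phi> x y) ` (A \<times> B)) \<subseteq> ?V"
    unfolding riesz_span_def by blast
next
  show "{ev \<phi> t | t. gens t \<subseteq> A \<times> B} \<subseteq> riesz_span ((\<lambda>(x, y). \<phi> x y) ` (A \<times> B))"
    unfolding riesz_span_def
  proof (clarsimp)
    fix t S assume "gens t \<subseteq> A \<times> B" "riesz_subspace S" "(\<lambda>(x, y). \<phi> x y) ` (A \<times> B) \<subseteq> S"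
    then show "ev \<phi> t \<in> S" by (intro ev_in_subspace) auto
  qed
qed

definition evF :: "('x \<Rightarrow> 'y \<Rightarrow> 'a \<Rightarrow> real) \<Rightarrow> ('x, 'y) tm \<Rightarrow> 'a \<Rightarrow> real" where
  "evF a t = (\<lambda>s. ev (\<lambda>x y. a x y s) t)"

lemma evF_simps:
  "evF a (Gen x y) = a x y"
  "evF a (Add p q) = (\<lambda>s. evF a p s + evF a q s)"
  "evF a (Scl c p) = (\<lambda>s. c * evF a p s)"
  "evF a (Sup p q) = (\<lambda>s. max (evF a p s) (evF a q s))"
  by (auto simp: evF_def sup_max)

context
  fixes X :: "'a topology" and E
  assumes E: "riesz_subspace_C X E"
begin

lemma rsC_zero: "(\<lambda>x. 0) \<in> E" using E by (simp add: riesz_subspace_C_def)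
lemma rsC_add: "f \<in> E \<Longrightarrow> g \<in> E \<Longrightarrow> (\<lambda>x. f x + g x) \<in> E" using E by (simp add: riesz_subspace_C_def)
lemma rsC_scale: "f \<in> E \<Longrightarrow> (\<lambda>x. c * f x) \<in> E" using E by (simp add: riesz_subspace_C_def)
lemma rsC_max: "f \<in> E \<Longrightarrow> g \<in> E \<Longrightarrow> (\<lambda>x. max (f x) (g x)) \<in> E" using E by (simp add: riesz_subspace_C_def)
lemma rsC_diff: "f \<in> E \<Longrightarrow> g \<in> E \<Longrightarrow> (\<lambda>x. f x - g x) \<in> E"
proof -
  assume "f \<in> E" "g \<in> E"
  hence "(\<lambda>x. f x + (\<lambda>x. (-1) * g x) x) \<in> E" by (intro rsC_add rsC_scale)
  thus ?thesis by simp
qed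
lemma rsC_min: "f \<in> E \<Longrightarrow> g \<in> E \<Longrightarrow> (\<lambda>x. min (f x) (g x)) \<in> E"
proof -
  assume "f \<in> E" "g \<in> E"
  hence "(\<lambda>x. (-1) * (\<lambda>x. max ((\<lambda>x. (-1) * f x) x) ((\<lambda>x. (-1) * g x) x)) x) \<in> E"
    by (intro rsC_scale rsC_max)
  moreover have "(\<lambda>x. (-1) * (\<lambda>x. max ((\<lambda>x. (-1) * f x) x) ((\<lambda>x. (-1) * g x) x)) x) = (\<lambda>x. min (f x) (g x))"
    by (auto simp: fun_eq_iff max_def min_def)
  ultimately show ?thesis by simp
qed
lemma rsC_abs: "f \<in> E \<Longrightarrow> (\<lambda>x. \<bar>f x\<bar>) \<in> E"
proof -
  assume "f \<in> E"
  hence "(\<lambda>x. max (f x) ((\<lambda>x. (-1) * f x) x)) \<in> E" by (intro rsC_max rsC_scale)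
  moreover have "(\<lambda>x. max (f x) ((\<lambda>x. (-1) * f x) x)) = (\<lambda>x. \<bar>f x\<bar>)" by (auto simp: fun_eq_iff)
  ultimately show ?thesis by simp
qed
lemma rsC_sum: "finite I \<Longrightarrow> (\<forall>i\<in>I. f i \<in> E) \<Longrightarrow> (\<lambda>x. \<Sum>i\<in>I. f i x) \<in> E"
proof (induction I rule: finite_induct)
  case empty then show ?case by (simp add: rsC_zero)
next
  case (insert j I)
  then have "(\<lambda>x. f j x + (\<lambda>x. \<Sum>i\<in>I. f i x) x) \<in> E" by (intro rsC_add) auto
  then show ?case using insert by simp
qed
lemma rsC_out: "f \<in> E \<Longrightarrow> x \<notin> topspace X \<Longrightarrow> f x = 0"
  using E by (auto simp: riesz_subspace_C_def Cfun_def)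
lemma rsC_cont: "f \<in> E \<Longrightarrow> continuous_map X euclideanreal f"
  using E by (auto simp: riesz_subspace_C_def Cfun_def)
lemma rsC_bounded:
  assumes "compact_space X" "f \<in> E"
  shows "\<exists>M. \<forall>x. \<bar>f x\<bar> \<le> M"
proof -
  have "compactin euclideanreal (f ` topspace X)"
    using assms rsC_cont[OF assms(2)] by (metis compact_space_def image_compactin)
  hence "bounded (f ` topspace X)" by (simp add: compact_imp_bounded)
  then obtain M where M: "\<forall>y\<in>f ` topspace X. norm y \<le> M" by (auto simp: bounded_iff)
  show ?thesis
  proof (intro exI allI)
    fix x show "\<bar>f x\<bar> \<le> max M 0"
      using M rsC_out[OF assms(2), of x] by (cases "x \<in> topspace X") auto
  qed
qed
lemma rsC_evF: "(\<forall>(x, y)\<in>gens t. a x y \<in> E) \<Longrightarrow> evF a t \<in> E"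
  by (induction t) (auto simp: evF_simps intro: rsC_add rsC_scale rsC_max)

end


locale bim =
  fixes X :: "'a topology" and Y :: "'b topology"
    and E :: "('a \<Rightarrow> real) set" and F :: "('b \<Rightarrow> real) set"
    and \<phi> :: "('a \<Rightarrow> real) \<Rightarrow> ('b \<Rightarrow> real) \<Rightarrow> 'g::{ordered_real_vector,lattice}"
  assumes E: "riesz_subspace_C X E" and F: "riesz_subspace_C Y F"
    and cE: "\<forall>c. const_on X c \<in> E" and cF: "\<forall>c. const_on Y c \<in> F"
    and cX: "compact_space X" and cY: "compact_space Y"
    and bm: "riesz_bimorphism E F \<phi>"
begin

lemma addL: "x \<in> E \<Longrightarrow> x' \<in> E \<Longrightarrow> y \<in> F \<Longrightarrow> \<phi> (\<lambda>t. x t + x' t) y = \<phi> x y + \<phi> x' y"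
  using bm by (simp add: riesz_bimorphism_def)
lemma sclL: "x \<in> E \<Longrightarrow> y \<in> F \<Longrightarrow> \<phi> (\<lambda>t. c * x t) y = c *\<^sub>R \<phi> x y"
  using bm by (simp add: riesz_bimorphism_def)
lemma addR: "x \<in> E \<Longrightarrow> y \<in> F \<Longrightarrow> y' \<in> F \<Longrightarrow> \<phi> x (\<lambda>t. y t + y' t) = \<phi> x y + \<phi> x y'"
  using bm by (simp add: riesz_bimorphism_def)
lemma sclR: "x \<in> E \<Longrightarrow> y \<in> F \<Longrightarrow> \<phi> x (\<lambda>t. c * y t) = c *\<^sub>R \<phi> x y"
  using bm by (simp add: riesz_bimorphism_def)
lemma supL: "x \<in> E \<Longrightarrow> x' \<in> E \<Longrightarrow> y \<in> F \<Longrightarrow> \<forall>t. 0 \<le> y t \<Longrightarrow>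
    \<phi> (\<lambda>t. max (x t) (x' t)) y = sup (\<phi> x y) (\<phi> x' y)"
  using bm by (simp add: riesz_bimorphism_def)
lemma supR: "x \<in> E \<Longrightarrow> y \<in> F \<Longrightarrow> y' \<in> F \<Longrightarrow> \<forall>t. 0 \<le> x t \<Longrightarrow>
    \<phi> x (\<lambda>t. max (y t) (y' t)) = sup (\<phi> x y) (\<phi> x y')"
  using bm by (simp add: riesz_bimorphism_def)

lemma zeroL: "y \<in> F \<Longrightarrow> \<phi> (\<lambda>t. 0) y = 0"
  using sclL[of "\<lambda>t. 0" y 0] rsC_zero[OF E] by simp
lemma zeroR: "x \<in> E \<Longrightarrow> \<phi> x (\<lambda>t. 0) = 0"
  using sclR[of x "\<lambda>t. 0" 0] rsC_zero[OF F] by simp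

lemma diffL: "x \<in> E \<Longrightarrow> x' \<in> E \<Longrightarrow> y \<in> F \<Longrightarrow> \<phi> (\<lambda>t. x t - x' t) y = \<phi> x y - \<phi> x' y"
proof -
  assume a: "x \<in> E" "x' \<in> E" "y \<in> F"
  have "\<phi> (\<lambda>t. x t + (\<lambda>t. (-1) * x' t) t) y = \<phi> x y + \<phi> (\<lambda>t. (-1) * x' t) y"
    using a by (intro addL rsC_scale[OF E])
  thus ?thesis using sclL[OF a(2,3), of "-1"] by simp
qed
lemma diffR: "x \<in> E \<Longrightarrow> y \<in> F \<Longrightarrow> y' \<in> F \<Longrightarrow> \<phi> x (\<lambda>t. y t - y' t) = \<phi> x y - \<phi> x y'"
proof -
  assume a: "x \<in> E" "y \<in> F" "y' \<in> F"
  have "\<phi> x (\<lambda>t. y t + (\<lambda>t. (-1) * y' t) t) = \<phi> x y + \<phi> x (\<lambda>t. (-1) * y' t)"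
    using a by (intro addR rsC_scale[OF F])
  thus ?thesis using sclR[OF a(1,3), of "-1"] by simp
qed

lemma posL: "x \<in> E \<Longrightarrow> y \<in> F \<Longrightarrow> \<forall>t. 0 \<le> x t \<Longrightarrow> \<forall>t. 0 \<le> y t \<Longrightarrow> 0 \<le> \<phi> x y"
proof -
  assume a: "x \<in> E" "y \<in> F" "\<forall>t. 0 \<le> x t" "\<forall>t. 0 \<le> y t"
  have "\<phi> (\<lambda>t. max (x t) ((\<lambda>t. 0) t)) y = sup (\<phi> x y) (\<phi> (\<lambda>t. 0) y)"
    using a by (intro supL rsC_zero[OF E]) auto
  moreover have "(\<lambda>t. max (x t) ((\<lambda>t. 0) t)) = x" using a(3) by (auto simp: fun_eq_iff)
  ultimately have "\<phi> x y = sup (\<phi> x y) 0" using zeroL[OF a(2)] by simp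
  thus ?thesis by (metis sup.cobounded2)
qed

lemma monoL: "x \<in> E \<Longrightarrow> x' \<in> E \<Longrightarrow> y \<in> F \<Longrightarrow> \<forall>t. x t \<le> x' t \<Longrightarrow> \<forall>t. 0 \<le> y t \<Longrightarrow> \<phi> x y \<le> \<phi> x' y"
proof -
  assume a: "x \<in> E" "x' \<in> E" "y \<in> F" "\<forall>t. x t \<le> x' t" "\<forall>t. 0 \<le> y t"
  have "0 \<le> \<phi> (\<lambda>t. x' t - x t) y" using a by (intro posL rsC_diff[OF E]) auto
  thus ?thesis using diffL[OF a(2,1,3)] by simp
qed

lemma monoR: "x \<in> E \<Longrightarrow> y \<in> F \<Longrightarrow> y' \<in> F \<Longrightarrow> \<forall>t. y t \<le> y' t \<Longrightarrow> \<forall>t. 0 \<le> x t \<Longrightarrow> \<phi> x y \<le> \<phi> x y'"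
proof -
  assume a: "x \<in> E" "y \<in> F" "y' \<in> F" "\<forall>t. y t \<le> y' t" "\<forall>t. 0 \<le> x t"
  have "0 \<le> \<phi> x (\<lambda>t. y' t - y t)" using a by (intro posL rsC_diff[OF F]) auto
  thus ?thesis using diffR[OF a(1,3,2)] by simp
qed

lemma infL: "x \<in> E \<Longrightarrow> x' \<in> E \<Longrightarrow> y \<in> F \<Longrightarrow> \<forall>t. 0 \<le> y t \<Longrightarrow>
    \<phi> (\<lambda>t. min (x t) (x' t)) y = inf (\<phi> x y) (\<phi> x' y)"
proof -
  assume a: "x \<in> E" "x' \<in> E" "y \<in> F" "\<forall>t. 0 \<le> y t"
  have e: "(\<lambda>t. min (x t) (x' t)) = (\<lambda>t. (\<lambda>t. x t + x' t) t - (\<lambda>t. max (x t) (x' t)) t)"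
    by (auto simp: fun_eq_iff min_def max_def)
  have "\<phi> (\<lambda>t. min (x t) (x' t)) y = \<phi> (\<lambda>t. x t + x' t) y - \<phi> (\<lambda>t. max (x t) (x' t)) y"
    unfolding e using a by (intro diffL rsC_add[OF E] rsC_max[OF E])
  also have "\<dots> = \<phi> x y + \<phi> x' y - sup (\<phi> x y) (\<phi> x' y)"
    using a by (simp add: addL supL)
  finally show ?thesis by (simp add: inf_eq_sum_sup)
qed

lemma infR: "x \<in> E \<Longrightarrow> y \<in> F \<Longrightarrow> y' \<in> F \<Longrightarrow> \<forall>t. 0 \<le> x t \<Longrightarrow>
    \<phi> x (\<lambda>t. min (y t) (y' t)) = inf (\<phi> x y) (\<phi> x y')"
proof -
  assume a: "x \<in> E" "y \<in> F" "y' \<in> F" "\<forall>t. 0 \<le> x t"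
  have e: "(\<lambda>t. min (y t) (y' t)) = (\<lambda>t. (\<lambda>t. y t + y' t) t - (\<lambda>t. max (y t) (y' t)) t)"
    by (auto simp: fun_eq_iff min_def max_def)
  have "\<phi> x (\<lambda>t. min (y t) (y' t)) = \<phi> x (\<lambda>t. y t + y' t) - \<phi> x (\<lambda>t. max (y t) (y' t))"
    unfolding e using a by (intro diffR rsC_add[OF F] rsC_max[OF F])
  also have "\<dots> = \<phi> x y + \<phi> x y' - sup (\<phi> x y) (\<phi> x y')"
    using a by (simp add: addR supR)
  finally show ?thesis by (simp add: inf_eq_sum_sup)
qed

lemma sumR: "finite I \<Longrightarrow> x \<in> E \<Longrightarrow> \<forall>j\<in>I. h j \<in> F \<Longrightarrow>
   \<phi> x (\<lambda>t. \<Sum>j\<in>I. c j * h j t) = (\<Sum>j\<in>I. c j *\<^sub>R \<phi> x (h j))"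
proof (induction I rule: finite_induct)
  case empty then show ?case using zeroR by simp
next
  case (insert i I)
  have "\<phi> x (\<lambda>t. \<Sum>j\<in>insert i I. c j * h j t) = \<phi> x (\<lambda>t. (\<lambda>t. c i * h i t) t + (\<lambda>t. \<Sum>j\<in>I. c j * h j t) t)"
    using insert by simp
  also have "\<dots> = \<phi> x (\<lambda>t. c i * h i t) + \<phi> x (\<lambda>t. \<Sum>j\<in>I. c j * h j t)"
    using insert by (intro addR rsC_scale[OF F] rsC_sum[OF F]) (auto intro: rsC_scale[OF F])
  finally show ?case using insert by (simp add: sclR)
qed

lemma phi_evF:
  assumes "h \<in> F" "\<forall>t. 0 \<le> h t" "\<forall>(x, y)\<in>gens t. a x y \<in> E"
  shows "\<phi> (evF a t) h = ev (\<lambda>x y. \<phi> (a x y) h) t"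
  using assms(3)
proof (induction t)
  case (Gen x y) then show ?case by (simp add: evF_simps)
next
  case (Add p q) then show ?case using assms by (simp add: evF_simps addL rsC_evF[OF E])
next
  case (Scl c p) then show ?case using assms by (simp add: evF_simps sclL rsC_evF[OF E])
next
  case (Sup p q) then show ?case using assms by (simp add: evF_simps supL rsC_evF[OF E])
qed


lemma sup_decomp:
  assumes I: "finite I" and h: "\<forall>J\<in>I. h J \<in> F" "\<forall>J\<in>I. \<forall>t. 0 \<le> h J t"
    and disj: "\<forall>J\<in>I. \<forall>K\<in>I. J \<noteq> K \<longrightarrow> (\<forall>t. min (h J t) (h K t) = 0)"
    and pq: "\<forall>J\<in>I. p J \<in> E" "\<forall>J\<in>I. q J \<in> E"
  shows "sup (\<Sum>J\<in>I. \<phi> (p J) (h J)) (\<Sum>J\<in>I. \<phi> (q J) (h J))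
       = (\<Sum>J\<in>I. \<phi> (\<lambda>s. max (p J s) (q J s)) (h J))"
proof -
  define w where "w J = (\<lambda>s. p J s - q J s)" for J
  define wp where "wp J = (\<lambda>s. max (w J s) 0)" for J
  define wn where "wn J = (\<lambda>s. max (- w J s) 0)" for J
  have wE: "w J \<in> E" if "J \<in> I" for J using pq that unfolding w_def by (auto intro: rsC_diff[OF E])
  have wpE: "wp J \<in> E" if "J \<in> I" for J
    using rsC_max[OF E wE[OF that] rsC_zero[OF E]] unfolding wp_def by simp
  have wnE: "wn J \<in> E" if "J \<in> I" for J
  proof -
    have "(\<lambda>s. max ((\<lambda>s. (-1) * w J s) s) ((\<lambda>s. 0) s)) \<in> E"
      by (intro rsC_max[OF E] rsC_scale[OF E] wE that rsC_zero[OF E])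
    thus ?thesis unfolding wn_def by simp
  qed
  have wpn: "\<phi> (w J) (h J) = \<phi> (wp J) (h J) - \<phi> (wn J) (h J)" if "J \<in> I" for J
  proof -
    have "w J = (\<lambda>s. wp J s - wn J s)" unfolding wp_def wn_def by (auto simp: fun_eq_iff max_def)
    thus ?thesis using diffL[OF wpE[OF that] wnE[OF that]] h that by metis
  qed
  define A where "A = (\<Sum>J\<in>I. \<phi> (p J) (h J))"
  define B where "B = (\<Sum>J\<in>I. \<phi> (q J) (h J))"
  define P where "P = (\<Sum>J\<in>I. \<phi> (wp J) (h J))"
  define N where "N = (\<Sum>J\<in>I. \<phi> (wn J) (h J))"
  have AB: "A - B = P - N"
  proof -
    have "A - B = (\<Sum>J\<in>I. \<phi> (p J) (h J) - \<phi> (q J) (h J))" unfolding A_def B_def by (simp add: sum_subtractf)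
    also have "\<dots> = (\<Sum>J\<in>I. \<phi> (w J) (h J))"
      using pq h unfolding w_def by (intro sum.cong refl) (simp add: diffL)
    also have "\<dots> = (\<Sum>J\<in>I. \<phi> (wp J) (h J) - \<phi> (wn J) (h J))" by (intro sum.cong refl wpn)
    finally show ?thesis unfolding P_def N_def by (simp add: sum_subtractf)
  qed
  have wpnn: "\<forall>s. 0 \<le> wp J s" "\<forall>s. 0 \<le> wn J s" for J unfolding wp_def wn_def by auto
  have Pp: "\<forall>J\<in>I. 0 \<le> \<phi> (wp J) (h J)" and Np: "\<forall>J\<in>I. 0 \<le> \<phi> (wn J) (h J)"
    using h wpnn by (auto intro!: posL wpE wnE)
  have P0: "0 \<le> P" "0 \<le> N" unfolding P_def N_def using Pp Np by (auto intro: sum_nonneg)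
  have term0: "inf (\<phi> (wn K) (h K)) (\<phi> (wp J) (h J)) \<le> 0" if "J \<in> I" "K \<in> I" for J K
  proof (cases "J = K")
    case True
    have "(\<lambda>s. min (wn K s) (wp J s)) = (\<lambda>s. 0)" unfolding wp_def wn_def True by (auto simp: fun_eq_iff)
    hence "inf (\<phi> (wn K) (h K)) (\<phi> (wp J) (h J)) = \<phi> (\<lambda>s. 0) (h K)"
      using infL[of "wn K" "wp J" "h K"] that h True wpE wnE by simp
    thus ?thesis using zeroL h that by simp
  next
    case False
    define z where "z = (\<lambda>s. wn K s + wp J s)"
    have zE: "z \<in> E" unfolding z_def using that by (intro rsC_add[OF E] wpE wnE)
    have zp: "\<forall>s. 0 \<le> z s" unfolding z_def using wpnn by (simp add: add_nonneg_nonneg)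
    have "inf (\<phi> (wn K) (h K)) (\<phi> (wp J) (h J)) \<le> inf (\<phi> z (h K)) (\<phi> z (h J))"
      using that h wpnn zE unfolding z_def
      by (intro inf_mono monoL wpE wnE) (auto simp: add_increasing add_increasing2)
    also have "\<dots> = \<phi> z (\<lambda>t. min (h K t) (h J t))" using that h zE zp by (simp add: infR)
    also have "(\<lambda>t. min (h K t) (h J t)) = (\<lambda>t. 0)" using disj that False by auto
    finally show ?thesis using zeroR zE by simp
  qed
  have "inf P N \<le> (\<Sum>J\<in>I. inf (\<phi> (wp J) (h J)) N)"
    unfolding P_def using I Pp P0 by (intro pos_inf_sum_le) auto
  also have "\<dots> \<le> (\<Sum>J\<in>I. (\<Sum>K\<in>I. inf (\<phi> (wn K) (h K)) (\<phi> (wp J) (h J))))"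
  proof (intro sum_mono)
    fix J assume J: "J \<in> I"
    have "inf (\<phi> (wp J) (h J)) N = inf N (\<phi> (wp J) (h J))" by (simp add: inf_commute)
    also have "\<dots> \<le> (\<Sum>K\<in>I. inf (\<phi> (wn K) (h K)) (\<phi> (wp J) (h J)))"
      unfolding N_def using I Np Pp J by (intro pos_inf_sum_le) auto
    finally show "inf (\<phi> (wp J) (h J)) N \<le> (\<Sum>K\<in>I. inf (\<phi> (wn K) (h K)) (\<phi> (wp J) (h J)))" .
  qed
  also have "\<dots> \<le> 0" using term0 by (intro sum_nonpos) auto
  finally have "inf P N = 0" using P0 by (intro antisym) auto
  hence supPN: "sup (P - N) 0 = P" by (rule disj_pos_part)
  have "sup A B = sup (A - B) 0 + B" using add_sup_right[of "A - B" 0 B] by simp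
  also have "\<dots> = B + P" using AB supPN by (simp add: add.commute)
  also have "\<dots> = (\<Sum>J\<in>I. \<phi> (q J) (h J) + \<phi> (wp J) (h J))" unfolding B_def P_def by (simp add: sum.distrib)
  also have "\<dots> = (\<Sum>J\<in>I. \<phi> (\<lambda>s. max (p J s) (q J s)) (h J))"
  proof (intro sum.cong refl)
    fix J assume J: "J \<in> I"
    have "\<phi> (q J) (h J) + \<phi> (wp J) (h J) = \<phi> (\<lambda>s. q J s + wp J s) (h J)"
      using J pq h wpE by (simp add: addL)
    also have "(\<lambda>s. q J s + wp J s) = (\<lambda>s. max (p J s) (q J s))"
      unfolding wp_def w_def by (auto simp: fun_eq_iff max_def)
    finally show "\<phi> (q J) (h J) + \<phi> (wp J) (h J) = \<phi> (\<lambda>s. max (p J s) (q J s)) (h J)" .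
  qed
  finally show ?thesis unfolding A_def B_def .
qed

lemma decomp:
  assumes I: "finite I" and h: "\<forall>J\<in>I. h J \<in> F" "\<forall>J\<in>I. \<forall>t. 0 \<le> h J t"
    and disj: "\<forall>J\<in>I. \<forall>K\<in>I. J \<noteq> K \<longrightarrow> (\<forall>t. min (h J t) (h K t) = 0)"
    and a: "\<forall>J\<in>I. \<forall>(x, y)\<in>gens t. a J x y \<in> E"
  shows "ev (\<lambda>x y. \<Sum>J\<in>I. \<phi> (a J x y) (h J)) t = (\<Sum>J\<in>I. \<phi> (evF (a J) t) (h J))"
  using a
proof (induction t)
  case (Gen x y) then show ?case by (simp add: evF_simps)
next
  case (Add p q)
  then show ?case using h by (simp add: evF_simps addL rsC_evF[OF E] sum.distrib)
next
  case (Scl c p)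
  then show ?case using h by (simp add: evF_simps sclL rsC_evF[OF E] scaleR_sum_right)
next
  case (Sup p q)
  have "ev (\<lambda>x y. \<Sum>J\<in>I. \<phi> (a J x y) (h J)) (Sup p q)
     = sup (\<Sum>J\<in>I. \<phi> (evF (a J) p) (h J)) (\<Sum>J\<in>I. \<phi> (evF (a J) q) (h J))"
    using Sup by simp
  also have "\<dots> = (\<Sum>J\<in>I. \<phi> (\<lambda>s. max (evF (a J) p s) (evF (a J) q s)) (h J))"
    using Sup.prems by (intro sup_decomp I h disj) (auto intro!: rsC_evF[OF E])
  finally show ?case by (simp add: evF_simps)
qed

end


definition tent :: "real \<Rightarrow> real \<Rightarrow> real \<Rightarrow> real \<Rightarrow> real" where
  "tent \<delta> \<eta> a v = max 0 (min 1 (min ((v - a) / \<eta>) ((a + \<delta> - v) / \<eta>)))"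

definition tentF :: "'b topology \<Rightarrow> real \<Rightarrow> real \<Rightarrow> real \<Rightarrow> ('b \<Rightarrow> real) \<Rightarrow> 'b \<Rightarrow> real" where
  "tentF Y \<delta> \<eta> a y = (\<lambda>t. if t \<in> topspace Y then tent \<delta> \<eta> a (y t) else 0)"

fun hh :: "'b topology \<Rightarrow> real \<Rightarrow> real \<Rightarrow> real \<Rightarrow> int list \<Rightarrow> ('b \<Rightarrow> real) list \<Rightarrow> 'b \<Rightarrow> real" where
  "hh Y \<delta> \<eta> \<theta> [] [] = const_on Y 1"
| "hh Y \<delta> \<eta> \<theta> (j # J) (y # ys) = (\<lambda>t. min (tentF Y \<delta> \<eta> (\<theta> + of_int j * \<delta>) y t) (hh Y \<delta> \<eta> \<theta> J ys t))"
| "hh Y \<delta> \<eta> \<theta> _ _ = (\<lambda>t. 0)"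

lemma tent_range: "0 \<le> tent \<delta> \<eta> a v" "tent \<delta> \<eta> a v \<le> 1"
  by (auto simp: tent_def)

lemma tent_pos: "0 < \<eta> \<Longrightarrow> 0 < tent \<delta> \<eta> a v \<Longrightarrow> a < v \<and> v < a + \<delta>"
proof -
  assume h: "0 < \<eta>" "0 < tent \<delta> \<eta> a v"
  hence "0 < min 1 (min ((v - a) / \<eta>) ((a + \<delta> - v) / \<eta>))" unfolding tent_def
    by (simp add: less_max_iff_disj)
  hence "0 < (v - a) / \<eta>" "0 < (a + \<delta> - v) / \<eta>" by simp_all
  thus ?thesis using h(1) by (auto simp: zero_less_divide_iff)
qed

lemma tent_one: "0 < \<eta> \<Longrightarrow> a + \<eta> \<le> v \<Longrightarrow> v \<le> a + \<delta> - \<eta> \<Longrightarrow> tent \<delta> \<eta> a v = 1"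
  by (auto simp: tent_def min_def max_def le_divide_eq field_simps)

lemma tentF_in:
  assumes F: "riesz_subspace_C Y F" and cF: "\<forall>c. const_on Y c \<in> F" and y: "y \<in> F" and "0 < \<eta>"
  shows "tentF Y \<delta> \<eta> a y \<in> F"
proof -
  let ?f = "\<lambda>t. max ((\<lambda>t. 0) t) ((\<lambda>t. min (const_on Y 1 t) ((\<lambda>t. min ((\<lambda>t. (1/\<eta>) * ((\<lambda>t. y t - const_on Y a t) t)) t)
      ((\<lambda>t. (1/\<eta>) * ((\<lambda>t. const_on Y (a + \<delta>) t - y t) t)) t)) t)) t)"
  have "?f \<in> F"
    using cF y by (intro rsC_max[OF F] rsC_zero[OF F] rsC_min[OF F] rsC_scale[OF F] rsC_diff[OF F]) auto
  moreover have "?f = tentF Y \<delta> \<eta> a y"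
    using rsC_out[OF F y]
    by (auto simp: fun_eq_iff tentF_def tent_def const_on_def divide_inverse mult.commute)
  ultimately show ?thesis by simp
qed

context
  fixes Y :: "'b topology" and F :: "('b \<Rightarrow> real) set" and \<delta> \<eta> \<theta> :: real
  assumes F: "riesz_subspace_C Y F" and cF: "\<forall>c. const_on Y c \<in> F" and \<eta>: "0 < \<eta>" and \<delta>: "0 < \<delta>"
begin

lemma hh_in: "set ys \<subseteq> F \<Longrightarrow> hh Y \<delta> \<eta> \<theta> J ys \<in> F"
proof (induction ys arbitrary: J)
  case Nil
  then show ?case using cF rsC_zero[OF F] by (cases J) auto
next
  case (Cons y ys)
  then show ?case using rsC_zero[OF F]
    by (cases J) (auto intro!: rsC_min[OF F] tentF_in[OF F cF] \<eta>)
qed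

lemma hh_range: "0 \<le> hh Y \<delta> \<eta> \<theta> J ys t \<and> hh Y \<delta> \<eta> \<theta> J ys t \<le> 1"
proof (induction ys arbitrary: J)
  case Nil
  then show ?case by (cases J) (auto simp: const_on_def)
next
  case (Cons y ys)
  then show ?case
    by (cases J) (auto simp: tentF_def tent_range min_le_iff_disj)
qed

lemma hh_pos: "length J = length ys \<Longrightarrow> 0 < hh Y \<delta> \<eta> \<theta> J ys t \<Longrightarrow>
   t \<in> topspace Y \<and> (\<forall>i<length ys. \<theta> + of_int (J!i) * \<delta> < (ys!i) t \<and> (ys!i) t < \<theta> + of_int (J!i) * \<delta> + \<delta>)"
proof (induction ys arbitrary: J)
  case Nil
  then show ?case by (auto simp: const_on_def split: if_splits)
next
  case (Cons y ys)
  then obtain j J' where J: "J = j # J'" by (cases J) auto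
  with Cons.prems have p1: "0 < tentF Y \<delta> \<eta> (\<theta> + of_int j * \<delta>) y t" and p2: "0 < hh Y \<delta> \<eta> \<theta> J' ys t"
    by auto
  from p1 have "t \<in> topspace Y" "0 < tent \<delta> \<eta> (\<theta> + of_int j * \<delta>) (y t)"
    by (auto simp: tentF_def split: if_splits)
  with tent_pos[OF \<eta>] have "\<theta> + of_int j * \<delta> < y t \<and> y t < \<theta> + of_int j * \<delta> + \<delta>" by blast
  with Cons.IH[of J'] p2 Cons.prems J show ?case
    by (auto simp: nth_Cons split: nat.splits)
qed

lemma hh_one: "length J = length ys \<Longrightarrow> t \<in> topspace Y \<Longrightarrow>
   (\<forall>i<length ys. \<theta> + of_int (J!i) * \<delta> + \<eta> \<le> (ys!i) t \<and> (ys!i) t \<le> \<theta> + of_int (J!i) * \<delta> + \<delta> - \<eta>) \<Longrightarrow>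
   hh Y \<delta> \<eta> \<theta> J ys t = 1"
proof (induction ys arbitrary: J)
  case Nil
  then show ?case by (auto simp: const_on_def)
next
  case (Cons y ys)
  then obtain j J' where J: "J = j # J'" by (cases J) auto
  have "\<forall>i<length ys. \<theta> + of_int (J'!i) * \<delta> + \<eta> \<le> (ys!i) t \<and> (ys!i) t \<le> \<theta> + of_int (J'!i) * \<delta> + \<delta> - \<eta>"
  proof (intro allI impI)
    fix i assume "i < length ys"
    thus "\<theta> + of_int (J'!i) * \<delta> + \<eta> \<le> (ys!i) t \<and> (ys!i) t \<le> \<theta> + of_int (J'!i) * \<delta> + \<delta> - \<eta>"
      using Cons.prems(3) J by (auto dest!: spec[of _ "Suc i"])
  qed
  hence "hh Y \<delta> \<eta> \<theta> J' ys t = 1"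
    using Cons.prems J by (intro Cons.IH) auto
  moreover have "tent \<delta> \<eta> (\<theta> + of_int j * \<delta>) (y t) = 1"
    using Cons.prems J by (intro tent_one[OF \<eta>]) (auto dest: spec[of _ 0])
  ultimately show ?case using J Cons.prems by (simp add: tentF_def)
qed

lemma hh_disj:
  assumes "length J = length ys" "length J' = length ys" "J \<noteq> J'"
  shows "min (hh Y \<delta> \<eta> \<theta> J ys t) (hh Y \<delta> \<eta> \<theta> J' ys t) = 0"
proof (rule ccontr)
  assume "min (hh Y \<delta> \<eta> \<theta> J ys t) (hh Y \<delta> \<eta> \<theta> J' ys t) \<noteq> 0"
  hence "0 < hh Y \<delta> \<eta> \<theta> J ys t" "0 < hh Y \<delta> \<eta> \<theta> J' ys t"
    using hh_range[of J ys t] hh_range[of J' ys t] by (auto simp: min_def split: if_splits)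
  from hh_pos[OF assms(1) this(1)] hh_pos[OF assms(2) this(2)]
  have b: "\<forall>i<length ys. \<theta> + of_int (J!i) * \<delta> < (ys!i) t \<and> (ys!i) t < \<theta> + of_int (J!i) * \<delta> + \<delta>
            \<and> \<theta> + of_int (J'!i) * \<delta> < (ys!i) t \<and> (ys!i) t < \<theta> + of_int (J'!i) * \<delta> + \<delta>" by blast
  have "J ! i = J' ! i" if "i < length ys" for i
  proof -
    from b that have "of_int (J!i) * \<delta> < of_int (J'!i) * \<delta> + \<delta>" "of_int (J'!i) * \<delta> < of_int (J!i) * \<delta> + \<delta>"
      by auto
    hence "of_int (J!i) * \<delta> < (of_int (J'!i) + 1) * \<delta>" "of_int (J'!i) * \<delta> < (of_int (J!i) + 1) * \<delta>"
      by (auto simp: algebra_simps)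
    hence "real_of_int (J!i) < of_int (J'!i) + 1" "real_of_int (J'!i) < of_int (J!i) + 1"
      using \<delta> by (auto simp: mult_less_cancel_right)
    thus ?thesis by linarith
  qed
  hence "J = J'" using assms by (intro nth_equalityI) auto
  with assms(3) show False by simp
qed

lemma hh_out: "t \<notin> topspace Y \<Longrightarrow> hh Y \<delta> \<eta> \<theta> J ys t = 0"
proof (induction ys arbitrary: J)
  case Nil
  then show ?case by (cases J) (auto simp: const_on_def)
next
  case (Cons y ys)
  then show ?case by (cases J) (auto simp: tentF_def)
qed

end


lemma floor_cube:
  fixes v \<theta> \<delta> \<eta> M :: real
  assumes \<delta>: "0 < \<delta>" and \<theta>: "0 \<le> \<theta>" "\<theta> < \<delta>" and vM: "\<bar>v\<bar> \<le> M"
    and g: "\<forall>j::int. \<eta> \<le> \<bar>v - (\<theta> + of_int j * \<delta>)\<bar>"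
  defines "j0 \<equiv> \<lfloor>(v - \<theta>) / \<delta>\<rfloor>"
  shows "\<theta> + of_int j0 * \<delta> + \<eta> \<le> v \<and> v \<le> \<theta> + of_int j0 * \<delta> + \<delta> - \<eta>
     \<and> j0 \<in> {-(\<lceil>M / \<delta>\<rceil> + 1)..\<lceil>M / \<delta>\<rceil> + 1}"
proof -
  have f1: "of_int j0 \<le> (v - \<theta>) / \<delta>" "(v - \<theta>) / \<delta> < of_int j0 + 1" unfolding j0_def by linarith+
  hence l1: "of_int j0 * \<delta> \<le> v - \<theta>" "v - \<theta> < (of_int j0 + 1) * \<delta>"
    using \<delta> by (simp_all add: le_divide_eq divide_less_eq)
  have "\<eta> \<le> \<bar>v - (\<theta> + of_int j0 * \<delta>)\<bar>" "\<eta> \<le> \<bar>v - (\<theta> + of_int (j0 + 1) * \<delta>)\<bar>" using g by blast+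
  with l1 have c1: "\<theta> + of_int j0 * \<delta> + \<eta> \<le> v \<and> v \<le> \<theta> + of_int j0 * \<delta> + \<delta> - \<eta>"
    by (auto simp: algebra_simps abs_if split: if_splits)
  have "(v - \<theta>) / \<delta> \<le> M / \<delta>" using \<delta> \<theta> vM by (intro divide_right_mono) auto
  hence u: "j0 \<le> \<lceil>M / \<delta>\<rceil> + 1" using f1 by (meson floor_le_ceiling le_floor_iff order.trans j0_def add_increasing2 zero_le_one)
  have "(- M - \<delta>) / \<delta> \<le> (v - \<theta>) / \<delta>" using \<delta> \<theta> vM by (intro divide_right_mono) auto
  moreover have "(- M - \<delta>) / \<delta> = - (M / \<delta>) - 1" using \<delta> by (simp add: field_simps)
  ultimately have "- (M / \<delta>) - 2 < of_int j0" using f1 by linarith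
  moreover have "M / \<delta> \<le> of_int \<lceil>M / \<delta>\<rceil>" by simp
  ultimately have "- (\<lceil>M / \<delta>\<rceil> + 1) \<le> j0" by linarith
  with u c1 show ?thesis by simp
qed

lemma bad_unique:
  fixes v \<delta> \<eta> :: real and N :: nat
  assumes \<delta>: "0 < \<delta>" and N: "0 < N" and \<eta>: "\<eta> * (2 * real N + 2) \<le> \<delta>"
    and r: "r1 < N" "r2 < N"
    and b1: "\<bar>v - (real r1 * \<delta> / real N + of_int j1 * \<delta>)\<bar> < \<eta>"
    and b2: "\<bar>v - (real r2 * \<delta> / real N + of_int j2 * \<delta>)\<bar> < \<eta>"
  shows "r1 = r2"
proof -
  have "\<bar>(real r1 * \<delta> / real N + of_int j1 * \<delta>) - (real r2 * \<delta> / real N + of_int j2 * \<delta>)\<bar> < 2 * \<eta>"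
  proof -
    define A where "A = real r1 * \<delta> / real N + of_int j1 * \<delta>"
    define B where "B = real r2 * \<delta> / real N + of_int j2 * \<delta>"
    have "\<bar>v - A\<bar> < \<eta>" "\<bar>v - B\<bar> < \<eta>" using b1 b2 unfolding A_def B_def by auto
    hence "\<bar>A - B\<bar> < 2 * \<eta>" by linarith
    thus ?thesis unfolding A_def B_def .
  qed
  also have "(real r1 * \<delta> / real N + of_int j1 * \<delta>) - (real r2 * \<delta> / real N + of_int j2 * \<delta>)
     = (\<delta> / real N) * (real r1 - real r2 + of_int (j1 - j2) * real N)"
    using N by (simp add: field_simps)
  finally have "(\<delta> / real N) * \<bar>real r1 - real r2 + of_int (j1 - j2) * real N\<bar> < 2 * \<eta>"
    using \<delta> N by (simp add: abs_mult)
  hence "\<bar>real r1 - real r2 + of_int (j1 - j2) * real N\<bar> < 2 * \<eta> * real N / \<delta>"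
    using \<delta> N by (simp add: field_simps)
  also have "2 * \<eta> * real N / \<delta> < 1"
  proof -
    have "2 * \<eta> * real N < \<delta>"
    proof (cases "\<eta> \<le> 0")
      case True
      hence "\<eta> * real N \<le> 0" by (simp add: mult_nonpos_nonneg)
      then show ?thesis using \<delta> by linarith
    next
      case False
      hence "2 * \<eta> * real N < \<eta> * (2 * real N + 2)" by (auto simp: algebra_simps)
      then show ?thesis using \<eta> by linarith
    qed
    thus ?thesis using \<delta> by simp
  qed
  finally have lt: "\<bar>real r1 - real r2 + of_int (j1 - j2) * real N\<bar> < 1" .
  define z where "z = int r1 - int r2 + (j1 - j2) * int N"
  have "real_of_int z = real r1 - real r2 + of_int (j1 - j2) * real N" unfolding z_def by simp
  with lt have "\<bar>real_of_int z\<bar> < 1" by simp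
  hence "z = 0" by linarith
  hence "int r1 - int r2 = (j2 - j1) * int N" unfolding z_def by (simp add: algebra_simps)
  moreover have "\<bar>int r1 - int r2\<bar> < int N" using r by linarith
  ultimately have "\<bar>j2 - j1\<bar> * int N < int N" by (simp add: abs_mult)
  hence "\<bar>j2 - j1\<bar> < 1" using N by (simp add: mult_less_cancel_right2)
  hence "j1 = j2" by linarith
  with \<open>int r1 - int r2 = (j2 - j1) * int N\<close> show ?thesis by simp
qed


lemma single_pos_sum:
  fixes h :: "'j \<Rightarrow> real"
  assumes "finite GR" "\<forall>J\<in>GR. 0 \<le> h J" "\<forall>J\<in>GR. \<forall>K\<in>GR. J \<noteq> K \<longrightarrow> min (h J) (h K) = 0"
    and "J0 \<in> GR" "0 < h J0"
  shows "(\<Sum>J\<in>GR. c J * h J) = c J0 * h J0"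
proof -
  have "(\<Sum>J\<in>GR. c J * h J) = c J0 * h J0 + (\<Sum>J\<in>GR - {J0}. c J * h J)"
    using assms by (simp add: sum.remove)
  also have "(\<Sum>J\<in>GR - {J0}. c J * h J) = 0"
  proof (intro sum.neutral ballI)
    fix J assume J: "J \<in> GR - {J0}"
    hence "min (h J0) (h J) = 0" using assms by auto
    hence "h J = 0" using assms J by (auto simp: min_def split: if_splits)
    thus "c J * h J = 0" by simp
  qed
  finally show ?thesis by simp
qed

lemma sum_bound_disj:
  fixes h :: "'j \<Rightarrow> real"
  assumes "finite GR" "\<forall>J\<in>GR. 0 \<le> h J \<and> h J \<le> 1" "\<forall>J\<in>GR. \<forall>K\<in>GR. J \<noteq> K \<longrightarrow> min (h J) (h K) = 0"
    and "\<forall>J\<in>GR. \<bar>c J\<bar> \<le> M" "0 \<le> M"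
  shows "\<bar>\<Sum>J\<in>GR. c J * h J\<bar> \<le> M"
proof (cases "\<exists>J0\<in>GR. 0 < h J0")
  case True
  then obtain J0 where J0: "J0 \<in> GR" "0 < h J0" by blast
  hence "(\<Sum>J\<in>GR. c J * h J) = c J0 * h J0" using assms by (intro single_pos_sum) auto
  moreover have "\<bar>c J0 * h J0\<bar> \<le> M * 1" unfolding abs_mult using assms J0
    by (intro mult_mono) auto
  ultimately show ?thesis by simp
next
  case False
  hence "\<forall>J\<in>GR. h J = 0" using assms by force
  thus ?thesis using assms by simp
qed

lemma grid_approx:
  fixes Y :: "'b topology" and F :: "('b \<Rightarrow> real) set" and N :: nat
  assumes F: "riesz_subspace_C Y F" and cF: "\<forall>c. const_on Y c \<in> F"
    and ys: "set ys \<subseteq> F" and M: "\<forall>y\<in>set ys. \<forall>t. \<bar>y t\<bar> \<le> M" and M0: "0 \<le> M" and N: "0 < N"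
  shows "\<exists>(GR :: int list set) hs pts. finite GR \<and> (\<forall>r<N. \<forall>J\<in>GR. hs r J \<in> F \<and> (\<forall>t. 0 \<le> hs r J t))
     \<and> (\<forall>r<N. \<forall>J\<in>GR. \<forall>K\<in>GR. J \<noteq> K \<longrightarrow> (\<forall>t. min (hs r J t) (hs r K t) = 0))
     \<and> (\<forall>t. (\<Sum>r<N. \<Sum>y\<in>set ys. \<bar>y t - (\<Sum>J\<in>GR. y (pts r J) * hs r J t)\<bar>)
           \<le> real (length ys) + 2 * real (length ys) ^ 2 * M)"
proof -
  define n where "n = length ys"
  define \<delta> where "\<delta> = 1 / real N"
  define \<eta> where "\<eta> = \<delta> / (2 * real N + 2)"
  define \<theta> where "\<theta> r = real r * \<delta> / real N" for r :: nat
  define K where "K = \<lceil>M / \<delta>\<rceil> + 1"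
  define GR where "GR = {J. set J \<subseteq> {-K..K} \<and> length J = n}"
  define hs where "hs r J = hh Y \<delta> \<eta> (\<theta> r) J ys" for r J
  define pts where "pts r J = (SOME t. t \<in> topspace Y \<and> 0 < hs r J t)" for r J
  have \<delta>0: "0 < \<delta>" unfolding \<delta>_def using N by simp
  have \<eta>0: "0 < \<eta>" unfolding \<eta>_def using \<delta>0 by (simp add: add_pos_nonneg)
  have \<eta>\<delta>: "\<eta> * (2 * real N + 2) \<le> \<delta>" unfolding \<eta>_def by (simp add: add_pos_nonneg)
  have \<theta>r: "0 \<le> \<theta> r \<and> \<theta> r < \<delta>" if "r < N" for r
    unfolding \<theta>_def using that \<delta>0 N by (auto simp: divide_less_eq)
  have fin: "finite GR" unfolding GR_def by (intro finite_lists_length_eq) simp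
  have hsF: "\<forall>r<N. \<forall>J\<in>GR. hs r J \<in> F \<and> (\<forall>t. 0 \<le> hs r J t)"
    unfolding hs_def using hh_in[OF F cF \<eta>0 \<delta>0 ys] hh_range[OF F cF \<eta>0 \<delta>0] by blast
  have hs1: "0 \<le> hs r J t \<and> hs r J t \<le> 1" for r J t
    unfolding hs_def using hh_range[OF F cF \<eta>0 \<delta>0] by blast
  have disj: "\<forall>r<N. \<forall>J\<in>GR. \<forall>K\<in>GR. J \<noteq> K \<longrightarrow> (\<forall>t. min (hs r J t) (hs r K t) = 0)"
    unfolding hs_def GR_def n_def using hh_disj[OF F cF \<eta>0 \<delta>0] by auto
  define C0 where "C0 = real n + 2 * real n ^ 2 * M"
  have C00: "0 \<le> C0" unfolding C0_def using M0 by simp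
  have bound: "(\<Sum>r<N. \<Sum>y\<in>set ys. \<bar>y t - (\<Sum>J\<in>GR. y (pts r J) * hs r J t)\<bar>) \<le> C0" for t
  proof (cases "t \<in> topspace Y")
    case False
    hence "y t = 0" if "y \<in> set ys" for y using rsC_out[OF F] ys that by auto
    moreover have "hs r J t = 0" for r J unfolding hs_def using hh_out[OF F cF \<eta>0 \<delta>0 False] .
    ultimately have "(\<Sum>y\<in>set ys. \<bar>y t\<bar>) = 0" "\<And>r J. hs r J t = 0" by (auto intro: sum.neutral)
    thus ?thesis using C00 by simp
  next
    case True
    define good where "good r = (\<forall>i<n. \<forall>j::int. \<eta> \<le> \<bar>(ys!i) t - (\<theta> r + of_int j * \<delta>)\<bar>)" for r
    have c1: "(\<Sum>y\<in>set ys. \<bar>y t - (\<Sum>J\<in>GR. y (pts r J) * hs r J t)\<bar>)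
              \<le> real n * \<delta> + (if good r then 0 else 2 * real n * M)" if r: "r < N" for r
    proof (cases "good r")
      case True
      define J0 where "J0 = map (\<lambda>y. \<lfloor>(y t - \<theta> r) / \<delta>\<rfloor>) ys"
      have fc: "\<theta> r + of_int (J0!i) * \<delta> + \<eta> \<le> (ys!i) t \<and> (ys!i) t \<le> \<theta> r + of_int (J0!i) * \<delta> + \<delta> - \<eta>
            \<and> J0!i \<in> {-K..K}" if "i < n" for i
      proof -
        have e: "J0!i = \<lfloor>((ys!i) t - \<theta> r) / \<delta>\<rfloor>" using that by (simp add: J0_def n_def)
        have "\<bar>(ys!i) t\<bar> \<le> M" using M that by (auto simp: n_def)
        thus ?thesis unfolding e K_def using True[unfolded good_def] that \<theta>r[OF r]
          by (intro floor_cube[OF \<delta>0]) auto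
      qed
      have J0GR: "J0 \<in> GR" unfolding GR_def using fc by (auto simp: J0_def n_def in_set_conv_nth)
      have one: "hs r J0 t = 1" unfolding hs_def
        using fc True \<open>t \<in> topspace Y\<close> by (intro hh_one[OF F cF \<eta>0 \<delta>0]) (auto simp: J0_def n_def)
      have ex: "\<exists>t'. t' \<in> topspace Y \<and> 0 < hs r J0 t'" using True one \<open>t \<in> topspace Y\<close> by auto
      hence pt: "pts r J0 \<in> topspace Y \<and> 0 < hs r J0 (pts r J0)" unfolding pts_def by (rule someI_ex)
      have inb: "\<forall>i<n. \<theta> r + of_int (J0!i) * \<delta> < (ys!i) (pts r J0) \<and> (ys!i) (pts r J0) < \<theta> r + of_int (J0!i) * \<delta> + \<delta>"
        using hh_pos[OF F cF \<eta>0 \<delta>0, of J0 ys] pt unfolding hs_def by (auto simp: J0_def n_def)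
      have "\<bar>y t - (\<Sum>J\<in>GR. y (pts r J) * hs r J t)\<bar> \<le> \<delta>" if y: "y \<in> set ys" for y
      proof -
        obtain i where i: "i < n" "y = ys!i" using y by (auto simp: in_set_conv_nth n_def)
        have "(\<Sum>J\<in>GR. y (pts r J) * hs r J t) = y (pts r J0) * hs r J0 t"
          using fin hs1 disj r J0GR one by (intro single_pos_sum) auto
        also have "\<dots> = y (pts r J0)" using one by simp
        finally show ?thesis using fc[OF i(1)] inb i \<eta>0 by (auto simp: abs_if)
      qed
      hence "(\<Sum>y\<in>set ys. \<bar>y t - (\<Sum>J\<in>GR. y (pts r J) * hs r J t)\<bar>) \<le> real (card (set ys)) * \<delta>"
        using sum_bounded_above[of "set ys"] by (metis (no_types, lifting))
      also have "\<dots> \<le> real n * \<delta>" using \<delta>0 by (intro mult_right_mono) (auto simp: n_def card_length)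
      finally show ?thesis using True by simp
    next
      case False
      have "\<bar>y t - (\<Sum>J\<in>GR. y (pts r J) * hs r J t)\<bar> \<le> 2 * M" if y: "y \<in> set ys" for y
      proof -
        have "\<bar>\<Sum>J\<in>GR. y (pts r J) * hs r J t\<bar> \<le> M"
          using fin hs1 disj r M y M0 by (intro sum_bound_disj) auto
        moreover have "\<bar>y t\<bar> \<le> M" using M y by auto
        ultimately show ?thesis by linarith
      qed
      hence "(\<Sum>y\<in>set ys. \<bar>y t - (\<Sum>J\<in>GR. y (pts r J) * hs r J t)\<bar>) \<le> real (card (set ys)) * (2 * M)"
        using sum_bounded_above[of "set ys"] by (metis (no_types, lifting))
      also have "\<dots> \<le> real n * (2 * M)" using M0 by (intro mult_right_mono) (auto simp: n_def card_length)
      moreover have "0 \<le> real n * \<delta>" using \<delta>0 by simp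
      ultimately show ?thesis using False by (simp add: algebra_simps)
    qed
    have c2: "card {r\<in>{..<N}. \<not> good r} \<le> n"
    proof -
      define B where "B i = {r\<in>{..<N}. \<exists>j::int. \<bar>(ys!i) t - (\<theta> r + of_int j * \<delta>)\<bar> < \<eta>}" for i
      have sub: "{r\<in>{..<N}. \<not> good r} \<subseteq> (\<Union>i\<in>{..<n}. B i)"
        unfolding good_def B_def by (auto simp: not_le)
      have cB: "card (B i) \<le> 1" for i
      proof -
        have "\<forall>a1\<in>B i. \<forall>a2\<in>B i. a1 = a2"
          unfolding B_def \<theta>_def using bad_unique[OF \<delta>0 N \<eta>\<delta>] by blast
        thus ?thesis by (simp add: card_le_Suc0_iff_eq B_def)
      qed
      have "card {r\<in>{..<N}. \<not> good r} \<le> card (\<Union>i\<in>{..<n}. B i)"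
        using sub by (intro card_mono) (auto simp: B_def)
      also have "\<dots> \<le> (\<Sum>i<n. card (B i))" by (intro card_UN_le) (auto simp: B_def)
      also have "\<dots> \<le> (\<Sum>i<n. 1)" using cB by (intro sum_mono) auto
      finally show ?thesis by simp
    qed
    have "(\<Sum>r<N. \<Sum>y\<in>set ys. \<bar>y t - (\<Sum>J\<in>GR. y (pts r J) * hs r J t)\<bar>)
          \<le> (\<Sum>r<N. real n * \<delta> + (if good r then 0 else 2 * real n * M))"
      using c1 by (intro sum_mono) auto
    also have "\<dots> = real N * (real n * \<delta>) + (\<Sum>r<N. (if good r then 0 else 2 * real n * M))"
      by (simp add: sum.distrib)
    also have "(\<Sum>r<N. (if good r then 0 else 2 * real n * M)) = real (card {r\<in>{..<N}. \<not> good r}) * (2 * real n * M)"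
      by (simp add: sum.If_cases Int_def)
    also have "real N * (real n * \<delta>) = real n" unfolding \<delta>_def using N by simp
    also have "real (card {r\<in>{..<N}. \<not> good r}) * (2 * real n * M) \<le> real n * (2 * real n * M)"
      using c2 M0 by (intro mult_right_mono) auto
    finally show ?thesis unfolding C0_def by (simp add: power2_eq_square algebra_simps)
  qed
  show ?thesis
    apply (rule exI[where x=GR])
    apply (rule exI[where x=hs])
    apply (rule exI[where x=pts])
    using fin hsF disj bound unfolding C0_def n_def by simp
qed


lemma half_nonneg: "0 \<le> v + v \<Longrightarrow> 0 \<le> (v::'g::{ordered_real_vector,lattice})"
proof -
  assume "0 \<le> v + v"
  hence "0 \<le> (1/2::real) *\<^sub>R (v + v)" by (intro scaleR_nonneg_nonneg) auto
  also have "(1/2::real) *\<^sub>R (v + v) = (1/2::real) *\<^sub>R (2 *\<^sub>R v)" by (simp add: scaleR_2)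
  also have "\<dots> = v" by simp
  finally show ?thesis .
qed

lemma common_bound:
  fixes S :: "('a \<Rightarrow> real) set"
  assumes "finite S" "\<forall>f\<in>S. \<exists>M. \<forall>x. \<bar>f x\<bar> \<le> M"
  shows "\<exists>M\<ge>0. \<forall>f\<in>S. \<forall>x. \<bar>f x\<bar> \<le> M"
  using assms
proof (induction S rule: finite_induct)
  case empty then show ?case by auto
next
  case (insert g S)
  then obtain M where M: "M \<ge> 0" "\<forall>f\<in>S. \<forall>x. \<bar>f x\<bar> \<le> M" by auto
  obtain M' where M': "\<forall>x. \<bar>g x\<bar> \<le> M'" using insert by auto
  show ?case
  proof (rule exI[of _ "max M M'"], intro conjI ballI allI)
    show "0 \<le> max M M'" using M by simp
    fix f x assume "f \<in> insert g S"
    then show "\<bar>f x\<bar> \<le> max M M'" using M M' by (metis insert_iff max.coboundedI1 max.coboundedI2)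
  qed
qed

context bim
begin

lemma bound_lemma:
  assumes x: "x \<in> E" and d: "d \<in> F" and m: "m \<in> E" and e: "e \<in> F"
    and xm: "\<forall>s. \<bar>x s\<bar> \<le> m s" and de: "\<forall>t. \<bar>d t\<bar> \<le> e t"
  shows "rabs (\<phi> x d) \<le> \<phi> m e"
proof -
  have mx1: "(\<lambda>s. m s - x s) \<in> E" "(\<lambda>s. m s + x s) \<in> E" using x m by (auto intro: rsC_diff[OF E] rsC_add[OF E])
  have ed1: "(\<lambda>t. e t - d t) \<in> F" "(\<lambda>t. e t + d t) \<in> F" using d e by (auto intro: rsC_diff[OF F] rsC_add[OF F])
  have nn: "\<forall>s. 0 \<le> m s - x s" "\<forall>s. 0 \<le> m s + x s" "\<forall>t. 0 \<le> e t - d t" "\<forall>t. 0 \<le> e t + d t"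
    using xm de by (auto simp: abs_le_iff) (smt (verit))+
  have P1: "0 \<le> \<phi> (\<lambda>s. m s - x s) (\<lambda>t. e t + d t)" using mx1 ed1 nn by (intro posL) auto
  have P2: "0 \<le> \<phi> (\<lambda>s. m s + x s) (\<lambda>t. e t - d t)" using mx1 ed1 nn by (intro posL) auto
  have P3: "0 \<le> \<phi> (\<lambda>s. m s + x s) (\<lambda>t. e t + d t)" using mx1 ed1 nn by (intro posL) auto
  have P4: "0 \<le> \<phi> (\<lambda>s. m s - x s) (\<lambda>t. e t - d t)" using mx1 ed1 nn by (intro posL) auto
  have E1: "\<phi> (\<lambda>s. m s - x s) (\<lambda>t. e t + d t) = \<phi> m e + \<phi> m d - \<phi> x e - \<phi> x d"
    using x m d e ed1 by (simp add: diffL addR)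
  have E2: "\<phi> (\<lambda>s. m s + x s) (\<lambda>t. e t - d t) = \<phi> m e - \<phi> m d + \<phi> x e - \<phi> x d"
    using x m d e ed1 by (simp add: addL diffR)
  have E3: "\<phi> (\<lambda>s. m s + x s) (\<lambda>t. e t + d t) = \<phi> m e + \<phi> m d + \<phi> x e + \<phi> x d"
    using x m d e ed1 by (simp add: addL addR)
  have E4: "\<phi> (\<lambda>s. m s - x s) (\<lambda>t. e t - d t) = \<phi> m e - \<phi> m d - \<phi> x e + \<phi> x d"
    using x m d e ed1 by (simp add: diffL diffR)
  have "0 \<le> (\<phi> m e - \<phi> x d) + (\<phi> m e - \<phi> x d)"
    using add_nonneg_nonneg[OF P1 P2] unfolding E1 E2 by (simp add: algebra_simps)
  hence A: "\<phi> x d \<le> \<phi> m e" using half_nonneg by fastforce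
  have "0 \<le> (\<phi> m e + \<phi> x d) + (\<phi> m e + \<phi> x d)"
    using add_nonneg_nonneg[OF P3 P4] unfolding E3 E4 by (simp add: algebra_simps)
  hence "0 \<le> \<phi> m e + \<phi> x d" by (rule half_nonneg)
  from add_right_mono[OF this, of "- \<phi> x d"]
  have B: "- \<phi> x d \<le> \<phi> m e" by simp
  show ?thesis using A B by (simp add: rabs_le_iff)
qed


lemma const_scale: "const_on X c = (\<lambda>s. c * const_on X 1 s)" "const_on Y c = (\<lambda>s. c * const_on Y 1 s)"
  by (auto simp: const_on_def fun_eq_iff)

lemma approx_step:
  assumes gt: "gens t \<subseteq> E \<times> F" and pos: "\<forall>s u. 0 \<le> ev (\<lambda>x y. x s * y u) t"
    and ys: "set ys = snd ` gens t"
    and M0: "0 \<le> M" and Mx: "\<forall>x\<in>fst ` gens t. \<forall>s. \<bar>x s\<bar> \<le> M" and My: "\<forall>y\<in>set ys. \<forall>s. \<bar>y s\<bar> \<le> M"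
    and N: "0 < N"
  shows "- ((lip t * M * (real (length ys) + 2 * real (length ys) ^ 2 * M)) *\<^sub>R \<phi> (const_on X 1) (const_on Y 1))
          \<le> real N *\<^sub>R ev \<phi> t"
proof -
  define C0 where "C0 = real (length ys) + 2 * real (length ys) ^ 2 * M"
  have ysF: "set ys \<subseteq> F" using ys gt by auto
  from grid_approx[OF F cF ysF My M0 N] obtain GR :: "int list set" and hs pts where G:
    "finite GR \<and> (\<forall>r<N. \<forall>J\<in>GR. hs r J \<in> F \<and> (\<forall>t. 0 \<le> hs r J t))
     \<and> (\<forall>r<N. \<forall>J\<in>GR. \<forall>K\<in>GR. J \<noteq> K \<longrightarrow> (\<forall>t. min (hs r J t) (hs r K t) = 0))
     \<and> (\<forall>t. (\<Sum>r<N. \<Sum>y\<in>set ys. \<bar>y t - (\<Sum>J\<in>GR. y (pts r J) * hs r J t)\<bar>) \<le> real (length ys) + 2 * real (length ys) ^ 2 * M)"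
    by (elim exE) (rule that)
  have fin: "finite GR"
    and hsF: "\<forall>r<N. \<forall>J\<in>GR. hs r J \<in> F \<and> (\<forall>t. 0 \<le> hs r J t)"
    and disj: "\<forall>r<N. \<forall>J\<in>GR. \<forall>K\<in>GR. J \<noteq> K \<longrightarrow> (\<forall>t. min (hs r J t) (hs r K t) = 0)"
    and bnd: "\<forall>t. (\<Sum>r<N. \<Sum>y\<in>set ys. \<bar>y t - (\<Sum>J\<in>GR. y (pts r J) * hs r J t)\<bar>) \<le> C0"
    using G unfolding C0_def by auto
  define yt where "yt r y = (\<lambda>\<tau>. \<Sum>J\<in>GR. y (pts r J) * hs r J \<tau>)" for r y
  define e where "e r = (\<lambda>\<tau>. \<Sum>y\<in>set ys. \<bar>y \<tau> - yt r y \<tau>\<bar>)" for r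
  have ytF: "yt r y \<in> F" if "r < N" for r y
    unfolding yt_def using hsF that fin by (intro rsC_sum[OF F]) (auto intro: rsC_scale[OF F])
  have eF: "e r \<in> F" if "r < N" "set ys \<subseteq> F" for r
    unfolding e_def using that ytF by (intro rsC_sum[OF F]) (auto intro!: rsC_abs[OF F] rsC_diff[OF F])
  define m where "m = const_on X M"
  have mE: "m \<in> E" unfolding m_def using cE by simp
  have xm: "\<forall>s. \<bar>x s\<bar> \<le> m s" if "x \<in> fst ` gens t" for x
  proof
    fix s
    have xE: "x \<in> E" using that gt by auto
    show "\<bar>x s\<bar> \<le> m s"
      using Mx that rsC_out[OF E xE, of s] M0 by (cases "s \<in> topspace X") (auto simp: m_def const_on_def)
  qed
  define u where "u = \<phi> (const_on X 1) (const_on Y 1)"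
  define L where "L = lip t"
  have L0: "0 \<le> L" unfolding L_def by (rule lip_nonneg)
  have step: "0 \<le> ev \<phi> t + L *\<^sub>R \<phi> m (e r)" if r: "r < N" for r
  proof -
    have gen_bd: "\<forall>(x, y)\<in>gens t. rabs (\<phi> x y - \<phi> x (yt r y)) \<le> \<phi> m (e r)"
    proof (clarify)
      fix x y assume xy: "(x, y) \<in> gens t"
      have xE: "x \<in> E" and yF: "y \<in> F" using xy gt by auto
      have yys: "y \<in> set ys" using xy ys by force
      have "\<phi> x y - \<phi> x (yt r y) = \<phi> x (\<lambda>\<tau>. y \<tau> - yt r y \<tau>)" using xE yF ytF r by (simp add: diffR)
      also have "rabs \<dots> \<le> \<phi> m (e r)"
      proof (rule bound_lemma[OF xE _ mE eF[OF r ysF]])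
        show "(\<lambda>\<tau>. y \<tau> - yt r y \<tau>) \<in> F" using yF ytF r by (intro rsC_diff[OF F])
        show "\<forall>s. \<bar>x s\<bar> \<le> m s" using xm xy by force
        show "\<forall>\<tau>. \<bar>y \<tau> - yt r y \<tau>\<bar> \<le> e r \<tau>"
          unfolding e_def using yys by (auto intro: member_le_sum)
      qed
      finally show "rabs (\<phi> x y - \<phi> x (yt r y)) \<le> \<phi> m (e r)" .
    qed
    have low: "ev (\<lambda>x y. \<phi> x (yt r y)) t - L *\<^sub>R \<phi> m (e r) \<le> ev \<phi> t"
      unfolding L_def by (rule ev_lip_lower) (use gen_bd in auto)
    define a where "a J = (\<lambda>(x::'a \<Rightarrow> real) (y::'b \<Rightarrow> real) (s::'a). y (pts r J) * x s)" for J
    have eq1: "ev (\<lambda>x y. \<phi> x (yt r y)) t = ev (\<lambda>x y. \<Sum>J\<in>GR. \<phi> (a J x y) (hs r J)) t"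
    proof (rule ev_cong, clarify)
      fix x y assume xy: "(x, y) \<in> gens t"
      have xE: "x \<in> E" using xy gt by auto
      have "\<phi> x (yt r y) = (\<Sum>J\<in>GR. y (pts r J) *\<^sub>R \<phi> x (hs r J))"
        unfolding yt_def using fin xE hsF r by (intro sumR) auto
      also have "\<dots> = (\<Sum>J\<in>GR. \<phi> (a J x y) (hs r J))"
        unfolding a_def using xE hsF r by (intro sum.cong refl) (simp add: sclL)
      finally show "\<phi> x (yt r y) = (\<Sum>J\<in>GR. \<phi> (a J x y) (hs r J))" .
    qed
    have eq2: "ev (\<lambda>x y. \<Sum>J\<in>GR. \<phi> (a J x y) (hs r J)) t = (\<Sum>J\<in>GR. \<phi> (evF (a J) t) (hs r J))"
      using fin hsF disj r gt unfolding a_def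
      by (intro decomp) (auto intro!: rsC_scale[OF E])
    have h0: "0 \<le> (\<Sum>J\<in>GR. \<phi> (evF (a J) t) (hs r J))"
    proof (intro sum_nonneg posL)
      fix J assume J: "J \<in> GR"
      show "evF (a J) t \<in> E" unfolding a_def using gt by (intro rsC_evF[OF E]) (auto intro!: rsC_scale[OF E])
      show "hs r J \<in> F" "\<forall>t. 0 \<le> hs r J t" using hsF J r by auto
      show "\<forall>s. 0 \<le> evF (a J) t s"
      proof
        fix s
        have "evF (a J) t s = ev (\<lambda>x y. x s * y (pts r J)) t"
          unfolding evF_def a_def by (simp add: mult.commute)
        thus "0 \<le> evF (a J) t s" using pos by simp
      qed
    qed
    hence "0 \<le> ev (\<lambda>x y. \<phi> x (yt r y)) t" using eq1 eq2 by simp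
    hence "0 - L *\<^sub>R \<phi> m (e r) \<le> ev (\<lambda>x y. \<phi> x (yt r y)) t - L *\<^sub>R \<phi> m (e r)"
      by (rule diff_right_mono)
    from order_trans[OF this low] have "- (L *\<^sub>R \<phi> m (e r)) \<le> ev \<phi> t" by simp
    from add_right_mono[OF this, of "L *\<^sub>R \<phi> m (e r)"] show ?thesis by simp
  qed
  have "0 \<le> (\<Sum>r<N. ev \<phi> t + L *\<^sub>R \<phi> m (e r))" using step by (intro sum_nonneg) auto
  also have "\<dots> = real N *\<^sub>R ev \<phi> t + L *\<^sub>R (\<Sum>r<N. \<phi> m (e r))"
    by (simp add: sum.distrib scaleR_sum_right sum_constant_scaleR)
  also have "(\<Sum>r<N. \<phi> m (e r)) = \<phi> m (\<lambda>\<tau>. \<Sum>r<N. 1 * e r \<tau>)"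
    using sumR[of "{..<N}" m e "\<lambda>_. 1"] mE eF ysF by simp
  also have "\<dots> \<le> \<phi> m (const_on Y C0)"
  proof (rule monoR[OF mE])
    show "(\<lambda>\<tau>. \<Sum>r<N. 1 * e r \<tau>) \<in> F" using eF ysF by (intro rsC_sum[OF F]) (auto intro: rsC_scale[OF F])
    show "const_on Y C0 \<in> F" using cF by simp
    show "\<forall>s. 0 \<le> m s" using M0 by (simp add: m_def const_on_def)
    show "\<forall>\<tau>. (\<Sum>r<N. 1 * e r \<tau>) \<le> const_on Y C0 \<tau>"
    proof
      fix \<tau>
      show "(\<Sum>r<N. 1 * e r \<tau>) \<le> const_on Y C0 \<tau>"
      proof (cases "\<tau> \<in> topspace Y")
        case True
        then show ?thesis using bnd unfolding e_def yt_def const_on_def by simp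
      next
        case False
        have "(\<lambda>\<tau>. \<Sum>r<N. 1 * e r \<tau>) \<in> F" using eF ysF by (intro rsC_sum[OF F]) (auto intro: rsC_scale[OF F])
        from rsC_out[OF F this False] show ?thesis using False by (simp add: const_on_def)
      qed
    qed
  qed
  also have "\<phi> m (const_on Y C0) = (M * C0) *\<^sub>R u"
    unfolding m_def u_def using cE cF
    by (subst const_scale(1), subst const_scale(2)) (simp add: sclL sclR rsC_scale[OF F])
  finally have "0 \<le> real N *\<^sub>R ev \<phi> t + L *\<^sub>R ((M * C0) *\<^sub>R u)"
    using L0 by (meson add_left_mono order.trans scaleR_left_mono)
  hence "0 \<le> real N *\<^sub>R ev \<phi> t + (L * M * C0) *\<^sub>R u" by (simp add: mult.assoc)
  from add_right_mono[OF this, of "- ((L * M * C0) *\<^sub>R u)"]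
  show ?thesis unfolding C0_def u_def L_def by simp
qed

end


context bim
begin

lemma mono_transfer:
  assumes arch: "archimedean_riesz TYPE('g)"
    and gt: "gens t \<subseteq> E \<times> F" and pos: "\<forall>s u. 0 \<le> ev (\<lambda>x y. x s * y u) t"
  shows "0 \<le> ev \<phi> t"
proof -
  from finite_list[OF finite_imageI[OF finite_gens[of t], of snd]] obtain ys where ys: "set ys = snd ` gens t" by (elim exE) (rule that)
  have "\<exists>M\<ge>0. \<forall>f\<in>fst ` gens t. \<forall>x. \<bar>f x\<bar> \<le> M"
    using gt by (intro common_bound finite_imageI finite_gens) (auto intro!: rsC_bounded[OF E cX])
  then obtain Mx where Mx': "Mx \<ge> 0 \<and> (\<forall>f\<in>fst ` gens t. \<forall>x. \<bar>f x\<bar> \<le> Mx)" by (elim exE) (rule that)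
  note Mx = conjunct1[OF Mx'] conjunct2[OF Mx']
  have "\<exists>M\<ge>0. \<forall>f\<in>set ys. \<forall>x. \<bar>f x\<bar> \<le> M"
    using gt ys finite_gens[of t] by (intro common_bound) (auto intro!: rsC_bounded[OF F cY])
  then obtain My where My': "My \<ge> 0 \<and> (\<forall>f\<in>set ys. \<forall>x. \<bar>f x\<bar> \<le> My)" by (elim exE) (rule that)
  note My = conjunct1[OF My'] conjunct2[OF My']
  define M where "M = max Mx My"
  have M0: "0 \<le> M" and Mx'': "\<forall>x\<in>fst ` gens t. \<forall>s. \<bar>x s\<bar> \<le> M" and My'': "\<forall>y\<in>set ys. \<forall>s. \<bar>y s\<bar> \<le> M"
    unfolding M_def using Mx My by (auto intro: max.coboundedI1 max.coboundedI2)
  define c where "c = lip t * M * (real (length ys) + 2 * real (length ys) ^ 2 * M)"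
  define u where "u = \<phi> (const_on X 1) (const_on Y 1)"
  define v where "v = ev \<phi> t"
  have c0: "0 \<le> c" unfolding c_def using M0 by (intro mult_nonneg_nonneg add_nonneg_nonneg lip_nonneg) auto
  have u0: "0 \<le> u" unfolding u_def using cE cF by (intro posL) (auto simp: const_on_def)
  have key: "- (c *\<^sub>R u) \<le> real N *\<^sub>R v" if "0 < N" for N
    unfolding c_def u_def v_def by (rule approx_step[OF gt pos ys M0 Mx'' My'' that])
  define ng where "ng = sup (- v) 0"
  have ng0: "0 \<le> ng" unfolding ng_def by simp
  have kb: "real k *\<^sub>R ng \<le> u" for k :: nat
  proof (cases "k = 0")
    case True then show ?thesis using u0 by simp
  next
    case False
    define N where "N = nat \<lceil>real k * c\<rceil> + 1"
    have N0: "0 < N" unfolding N_def by simp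
    have kcN: "real k * c < real N" unfolding N_def by linarith
    have "(1 / real N) *\<^sub>R (- (c *\<^sub>R u)) \<le> (1 / real N) *\<^sub>R (real N *\<^sub>R v)"
      using key[OF N0] by (intro scaleR_left_mono) auto
    hence "- ((c / real N) *\<^sub>R u) \<le> v" using N0 by simp
    hence a: "- v \<le> (c / real N) *\<^sub>R u" by (simp add: minus_le_iff)
    have "c / real N \<le> 1 / real k"
      using kcN False N0 c0 by (simp add: field_simps)
    hence "(c / real N) *\<^sub>R u \<le> (1 / real k) *\<^sub>R u" using u0 by (rule scaleR_right_mono)
    with a have "- v \<le> (1 / real k) *\<^sub>R u" by simp
    moreover have "0 \<le> (1 / real k) *\<^sub>R u" using u0 by (intro scaleR_nonneg_nonneg) auto
    ultimately have "ng \<le> (1 / real k) *\<^sub>R u" unfolding ng_def by simp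
    hence "real k *\<^sub>R ng \<le> real k *\<^sub>R ((1 / real k) *\<^sub>R u)" by (intro scaleR_left_mono) auto
    thus ?thesis using False by simp
  qed
  have "ng = 0" using arch ng0 kb unfolding archimedean_riesz_def by blast
  hence "- v \<le> 0" unfolding ng_def by (metis sup.cobounded1)
  thus ?thesis unfolding v_def by simp
qed


end

lemma ev_zero_val: "(\<forall>(x, y)\<in>gens t. f x y = 0) \<Longrightarrow> ev f t = (0::'h::{ordered_real_vector,lattice})"
  by (induction t) auto

lemma rabs_real: "rabs (v::real) = \<bar>v\<bar>"
  by (simp add: rabs_def sup_max abs_if)

lemma bump:
  fixes X :: "'c topology" and E :: "('c \<Rightarrow> real) set"
  assumes E: "riesz_subspace_C X E" and cE: "\<forall>c. const_on X c \<in> E"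
    and S: "finite S" "S \<subseteq> E" and s0: "s0 \<in> topspace X" and \<rho>: "0 < \<rho>"
  shows "\<exists>p\<in>E. p s0 = \<rho> \<and> (\<forall>s. 0 \<le> p s \<and> p s \<le> \<rho>) \<and>
     (\<forall>s. 0 < p s \<longrightarrow> s \<in> topspace X \<and> (\<forall>x\<in>S. \<bar>x s - x s0\<bar> < \<rho>))"
proof -
  define p where "p = (\<lambda>s. max ((\<lambda>s. 0) s) ((\<lambda>s. const_on X \<rho> s - (\<lambda>s. \<Sum>x\<in>S. (\<lambda>s. \<bar>(\<lambda>s. x s - const_on X (x s0) s) s\<bar>) s) s) s))"
  have pE: "p \<in> E" unfolding p_def using S cE
    by (intro rsC_max[OF E] rsC_zero[OF E] rsC_diff[OF E] rsC_sum[OF E] rsC_abs[OF E])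
       (auto intro!: rsC_abs[OF E] rsC_diff[OF E])
  have ps0: "p s0 = \<rho>" unfolding p_def using s0 \<rho> by (simp add: const_on_def)
  have pr: "0 \<le> p s \<and> p s \<le> \<rho>" for s
  proof -
    define A where "A = (\<Sum>x\<in>S. \<bar>x s - const_on X (x s0) s\<bar>)"
    have A0: "0 \<le> A" unfolding A_def by (intro sum_nonneg) auto
    have c: "const_on X \<rho> s \<le> \<rho>" using \<rho> by (simp add: const_on_def)
    have e: "p s = max 0 (const_on X \<rho> s - A)" unfolding p_def A_def by simp
    have "const_on X \<rho> s - A \<le> \<rho>" using A0 c by linarith
    hence "max 0 (const_on X \<rho> s - A) \<le> \<rho>" using \<rho> by (intro max.boundedI) auto
    thus ?thesis unfolding e by simp
  qed
  have pp: "s \<in> topspace X \<and> (\<forall>x\<in>S. \<bar>x s - x s0\<bar> < \<rho>)" if "0 < p s" for s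
  proof -
    have st: "s \<in> topspace X"
    proof (rule ccontr)
      assume "s \<notin> topspace X"
      hence "p s = 0" using rsC_out[OF E pE] by simp
      with that show False by simp
    qed
    have lt: "(\<Sum>x\<in>S. \<bar>x s - x s0\<bar>) < \<rho>" using that st unfolding p_def by (simp add: const_on_def)
    have "\<bar>x s - x s0\<bar> < \<rho>" if "x \<in> S" for x
    proof -
      have "\<bar>x s - x s0\<bar> \<le> (\<Sum>x\<in>S. \<bar>x s - x s0\<bar>)" using S that by (intro member_le_sum) auto
      thus ?thesis using lt by linarith
    qed
    thus ?thesis using st by blast
  qed
  show ?thesis using pE ps0 pr pp by blast
qed

context bim
begin

lemma rev_transfer:
  assumes arch: "archimedean_riesz TYPE('g)" and bij: "bi_injective E F \<phi>"
    and gt: "gens t \<subseteq> E \<times> F" and nn: "0 \<le> ev \<phi> t"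
  shows "0 \<le> ev (\<lambda>x y. x s0 * y u0) t"
proof (rule ccontr)
  assume neg: "\<not> 0 \<le> ev (\<lambda>x y. x s0 * y u0) t"
  define \<kappa> where "\<kappa> = - ev (\<lambda>x y. x s0 * y u0) t"
  have \<kappa>0: "0 < \<kappa>" unfolding \<kappa>_def using neg by simp
  have s0: "s0 \<in> topspace X"
  proof (rule ccontr)
    assume "s0 \<notin> topspace X"
    hence "ev (\<lambda>x y. x s0 * y u0) t = (0::real)" using gt rsC_out[OF E]
      by (intro ev_zero_val) auto
    with neg show False by simp
  qed
  have u0: "u0 \<in> topspace Y"
  proof (rule ccontr)
    assume "u0 \<notin> topspace Y"
    hence "ev (\<lambda>x y. x s0 * y u0) t = (0::real)" using gt rsC_out[OF F]
      by (intro ev_zero_val) auto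
    with neg show False by simp
  qed
  have "\<exists>M\<ge>0. \<forall>f\<in>fst ` gens t. \<forall>x. \<bar>f x\<bar> \<le> M"
    using gt finite_gens[of t] by (intro common_bound finite_imageI) (auto intro!: rsC_bounded[OF E cX])
  then obtain Mx where Mx': "Mx \<ge> 0 \<and> (\<forall>f\<in>fst ` gens t. \<forall>x. \<bar>f x\<bar> \<le> Mx)" by (elim exE) (rule that)
  have "\<exists>M\<ge>0. \<forall>f\<in>snd ` gens t. \<forall>x. \<bar>f x\<bar> \<le> M"
    using gt finite_gens[of t] by (intro common_bound finite_imageI) (auto intro!: rsC_bounded[OF F cY])
  then obtain My where My': "My \<ge> 0 \<and> (\<forall>f\<in>snd ` gens t. \<forall>x. \<bar>f x\<bar> \<le> My)" by (elim exE) (rule that)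
  define M where "M = max Mx My"
  have M0: "0 \<le> M" unfolding M_def using Mx' by (simp add: le_max_iff_disj)
  have Mx: "\<forall>x\<in>fst ` gens t. \<forall>s. \<bar>x s\<bar> \<le> M"
  proof (intro ballI allI)
    fix x s assume "x \<in> fst ` gens t"
    hence "\<bar>x s\<bar> \<le> Mx" using Mx' by blast
    thus "\<bar>x s\<bar> \<le> M" unfolding M_def by (simp add: le_max_iff_disj)
  qed
  have My: "\<forall>y\<in>snd ` gens t. \<forall>s. \<bar>y s\<bar> \<le> M"
  proof (intro ballI allI)
    fix x s assume "x \<in> snd ` gens t"
    hence "\<bar>x s\<bar> \<le> My" using My' by blast
    thus "\<bar>x s\<bar> \<le> M" unfolding M_def by (simp add: le_max_iff_disj)
  qed
  define \<rho> where "\<rho> = \<kappa> / (4 * (lip t * M + 1))"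
  have lM: "0 \<le> lip t * M" using mult_nonneg_nonneg[OF lip_nonneg M0] .
  have \<rho>0: "0 < \<rho>" unfolding \<rho>_def using \<kappa>0 lM by (simp add: add_nonneg_pos)
  have \<rho>b: "lip t * (2 * M * \<rho>) \<le> \<kappa> / 2"
  proof -
    have "lip t * (2 * M * \<rho>) = 2 * (lip t * M) * \<rho>" by simp
    also have "\<dots> = \<kappa> * (lip t * M) / (2 * (lip t * M + 1))" unfolding \<rho>_def using lM by (simp add: field_simps)
    also have "\<dots> \<le> \<kappa> / 2" using \<kappa>0 lM by (simp add: field_simps)
    finally show ?thesis .
  qed
  obtain p where pE: "p \<in> E" and ps0: "p s0 = \<rho>" and pr: "\<forall>s. 0 \<le> p s \<and> p s \<le> \<rho>"
    and pp: "\<forall>s. 0 < p s \<longrightarrow> s \<in> topspace X \<and> (\<forall>x\<in>fst ` gens t. \<bar>x s - x s0\<bar> < \<rho>)"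
    using bump[OF E cE finite_imageI[OF finite_gens[of t], of fst] _ s0 \<rho>0] gt by fastforce
  obtain q where qF: "q \<in> F" and qu0: "q u0 = \<rho>" and qr: "\<forall>s. 0 \<le> q s \<and> q s \<le> \<rho>"
    and qp: "\<forall>s. 0 < q s \<longrightarrow> s \<in> topspace Y \<and> (\<forall>y\<in>snd ` gens t. \<bar>y s - y u0\<bar> < \<rho>)"
    using bump[OF F cF finite_imageI[OF finite_gens[of t], of snd] _ u0 \<rho>0] gt by fastforce
  define K where "K = 2 * \<rho> * \<rho> / \<kappa>"
  have K0: "0 \<le> K" unfolding K_def using \<kappa>0 \<rho>0 by simp
  define w where "w = Sup (Scl (-1) t) (Scl 0 t)"
  define z where "z = Add (Scl K w) (Scl (-1) (Gen p q))"
  have gz: "gens z \<subseteq> E \<times> F" unfolding z_def w_def using gt pE qF by auto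
  have posz: "\<forall>s u. 0 \<le> ev (\<lambda>x y. x s * y u) z"
  proof (intro allI)
    fix s u
    have evw: "ev (\<lambda>x y. x s * y u) w = max (- ev (\<lambda>x y. x s * y u) t) 0"
      unfolding w_def by (simp add: sup_max)
    have evz: "ev (\<lambda>x y. x s * y u) z = K * max (- ev (\<lambda>x y. x s * y u) t) 0 - p s * q u"
      unfolding z_def using evw by simp
    show "0 \<le> ev (\<lambda>x y. x s * y u) z"
    proof (cases "0 < p s \<and> 0 < q u")
      case True
      have cl: "\<forall>(x, y)\<in>gens t. rabs (x s * y u - x s0 * y u0) \<le> 2 * M * \<rho>"
      proof (clarify)
        fix x y assume xy: "(x, y) \<in> gens t"
        have xb: "\<bar>x s - x s0\<bar> \<le> \<rho>" using pp True xy by force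
        have yb: "\<bar>y u - y u0\<bar> \<le> \<rho>" using qp True xy by force
        have xM: "\<bar>x s0\<bar> \<le> M" using Mx xy by force
        have yM: "\<bar>y u\<bar> \<le> M" using My xy by force
        have "x s * y u - x s0 * y u0 = (x s - x s0) * y u + x s0 * (y u - y u0)" by (simp add: algebra_simps)
        hence "\<bar>x s * y u - x s0 * y u0\<bar> \<le> \<bar>x s - x s0\<bar> * \<bar>y u\<bar> + \<bar>x s0\<bar> * \<bar>y u - y u0\<bar>"
          by (simp add: abs_mult[symmetric] abs_triangle_ineq)
        also have "\<dots> \<le> \<rho> * M + M * \<rho>"
          using xb yb xM yM by (intro add_mono mult_mono) auto
        finally show "rabs (x s * y u - x s0 * y u0) \<le> 2 * M * \<rho>" by (simp add: rabs_real)
      qed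
      have "rabs (ev (\<lambda>x y. x s * y u) t - ev (\<lambda>x y. x s0 * y u0) t) \<le> lip t *\<^sub>R (2 * M * \<rho>)"
        by (rule ev_lip) (use cl in auto)
      hence "\<bar>ev (\<lambda>x y. x s * y u) t - ev (\<lambda>x y. x s0 * y u0) t\<bar> \<le> \<kappa> / 2"
        using \<rho>b by (simp add: rabs_real)
      hence "ev (\<lambda>x y. x s * y u) t \<le> - \<kappa> / 2" unfolding \<kappa>_def by linarith
      hence "\<kappa> / 2 \<le> max (- ev (\<lambda>x y. x s * y u) t) 0" by linarith
      hence "K * (\<kappa> / 2) \<le> K * max (- ev (\<lambda>x y. x s * y u) t) 0" using K0 by (rule mult_left_mono)
      moreover have "K * (\<kappa> / 2) = \<rho> * \<rho>" unfolding K_def using \<kappa>0 by simp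
      moreover have "p s * q u \<le> \<rho> * \<rho>" using pr qr by (intro mult_mono) auto
      ultimately show ?thesis using evz by linarith
    next
      case False
      hence "p s * q u = 0" using pr qr by (metis linorder_not_le mult_eq_0_iff order.antisym)
      moreover have "0 \<le> K * max (- ev (\<lambda>x y. x s * y u) t) 0" using K0 by simp
      ultimately show ?thesis using evz by linarith
    qed
  qed
  have "0 \<le> ev \<phi> z" by (rule mono_transfer[OF arch gz posz])
  moreover have "ev \<phi> z = K *\<^sub>R sup (- ev \<phi> t) 0 - \<phi> p q" unfolding z_def w_def by simp
  moreover have "sup (- ev \<phi> t) 0 = 0" using nn by (simp add: sup_absorb2)
  ultimately have "\<phi> p q \<le> 0" by simp
  moreover have "0 \<le> \<phi> p q" using pE qF pr qr by (intro posL) auto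
  ultimately have "\<phi> p q = 0" by simp
  hence "p = (\<lambda>t. 0) \<or> q = (\<lambda>t. 0)" using bij pE qF unfolding bi_injective_def by blast
  thus False using ps0 qu0 \<rho>0 by (auto simp: fun_eq_iff dest: spec[of _ s0] spec[of _ u0])
qed

lemma pos_iff:
  assumes arch: "archimedean_riesz TYPE('g)" and bij: "bi_injective E F \<phi>"
    and gt: "gens t \<subseteq> E \<times> F"
  shows "0 \<le> ev \<phi> t \<longleftrightarrow> (\<forall>s u. 0 \<le> ev (\<lambda>x y. x s * y u) t)"
  using mono_transfer[OF arch gt] rev_transfer[OF arch bij gt] by blast

lemma zero_iff:
  assumes arch: "archimedean_riesz TYPE('g)" and bij: "bi_injective E F \<phi>"
    and gt: "gens t \<subseteq> E \<times> F"
  shows "ev \<phi> t = 0 \<longleftrightarrow> (\<forall>s u. ev (\<lambda>x y. x s * y u) t = 0)"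
proof -
  have g2: "gens (Scl (-1) t) \<subseteq> E \<times> F" using gt by simp
  have "ev \<phi> t = 0 \<longleftrightarrow> 0 \<le> ev \<phi> t \<and> 0 \<le> ev \<phi> (Scl (-1) t)" by auto
  also have "\<dots> \<longleftrightarrow> (\<forall>s u. 0 \<le> ev (\<lambda>x y. x s * y u) t) \<and> (\<forall>s u. 0 \<le> ev (\<lambda>x y. x s * y u) (Scl (-1) t))"
    using pos_iff[OF arch bij gt] pos_iff[OF arch bij g2] by simp
  also have "\<dots> \<longleftrightarrow> (\<forall>s u. ev (\<lambda>x y. x s * y u) t = 0)" by (auto intro: antisym)
  finally show ?thesis .
qed

end

lemma riesz_subspace_span: "riesz_subspace (riesz_span A)"
  unfolding riesz_span_def riesz_subspace_def by auto

lemma riesz_span_sup: "A \<subseteq> riesz_span A"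
  unfolding riesz_span_def by auto

theorem corollary3p5:
  fixes X :: "'a topology" and Y :: "'b topology"
    and E :: "('a \<Rightarrow> real) set" and F :: "('b \<Rightarrow> real) set"
    and \<phi>1 :: "('a \<Rightarrow> real) \<Rightarrow> ('b \<Rightarrow> real) \<Rightarrow> 'g1::{ordered_real_vector,lattice}"
    and \<phi>2 :: "('a \<Rightarrow> real) \<Rightarrow> ('b \<Rightarrow> real) \<Rightarrow> 'g2::{ordered_real_vector,lattice}"
  assumes "compact_space X" "Hausdorff_space X"
    and "compact_space Y" "Hausdorff_space Y"
    and "riesz_subspace_C X E" "sup_dense_C X E" "\<forall>c. const_on X c \<in> E"
    and "riesz_subspace_C Y F" "sup_dense_C Y F" "\<forall>c. const_on Y c \<in> F"
    and "archimedean_riesz TYPE('g1)" "archimedean_riesz TYPE('g2)"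
    and "riesz_bimorphism E F \<phi>1" "bi_injective E F \<phi>1"
    and "riesz_bimorphism E F \<phi>2" "bi_injective E F \<phi>2"
  shows "(\<exists>T. riesz_iso_on (riesz_span ((\<lambda>(x, y). \<phi>1 x y) ` (E \<times> F)))
                          (riesz_span ((\<lambda>(x, y). \<phi>2 x y) ` (E \<times> F))) T
            \<and> (\<forall>x\<in>E. \<forall>y\<in>F. T (\<phi>1 x y) = \<phi>2 x y))
       \<and> (\<forall>T T'. riesz_iso_on (riesz_span ((\<lambda>(x, y). \<phi>1 x y) ` (E \<times> F)))
                          (riesz_span ((\<lambda>(x, y). \<phi>2 x y) ` (E \<times> F))) T
            \<and> (\<forall>x\<in>E. \<forall>y\<in>F. T (\<phi>1 x y) = \<phi>2 x y)
            \<and> riesz_iso_on (riesz_span ((\<lambda>(x, y). \<phi>1 x y) ` (E \<times> F)))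
                          (riesz_span ((\<lambda>(x, y). \<phi>2 x y) ` (E \<times> F))) T'
            \<and> (\<forall>x\<in>E. \<forall>y\<in>F. T' (\<phi>1 x y) = \<phi>2 x y)
            \<longrightarrow> (\<forall>z\<in>riesz_span ((\<lambda>(x, y). \<phi>1 x y) ` (E \<times> F)). T z = T' z))"
proof -
  interpret B1: bim X Y E F \<phi>1 by unfold_locales (use assms in auto)
  interpret B2: bim X Y E F \<phi>2 by unfold_locales (use assms in auto)
  define S1 where "S1 = riesz_span ((\<lambda>(x, y). \<phi>1 x y) ` (E \<times> F))"
  define S2 where "S2 = riesz_span ((\<lambda>(x, y). \<phi>2 x y) ` (E \<times> F))"
  have z0E: "(\<lambda>x. 0) \<in> E" using rsC_zero[OF assms(5)] .
  have z0F: "(\<lambda>x. 0) \<in> F" using rsC_zero[OF assms(8)] .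
  have S1e: "S1 = {ev \<phi>1 t | t. gens t \<subseteq> E \<times> F}" unfolding S1_def by (rule riesz_span_eq[OF z0E z0F])
  have S2e: "S2 = {ev \<phi>2 t | t. gens t \<subseteq> E \<times> F}" unfolding S2_def by (rule riesz_span_eq[OF z0E z0F])
  have transfer: "ev \<phi>1 t = ev \<phi>1 t' \<longleftrightarrow> ev \<phi>2 t = ev \<phi>2 t'"
    if "gens t \<subseteq> E \<times> F" "gens t' \<subseteq> E \<times> F" for t t'
  proof -
    define d where "d = Add t (Scl (-1) t')"
    have gd: "gens d \<subseteq> E \<times> F" unfolding d_def using that by simp
    have "ev \<phi>1 t = ev \<phi>1 t' \<longleftrightarrow> ev \<phi>1 d = 0" unfolding d_def by simp
    also have "\<dots> \<longleftrightarrow> (\<forall>s u. ev (\<lambda>x y. x s * y u) d = 0)" using B1.zero_iff[OF assms(11,14) gd] .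
    also have "\<dots> \<longleftrightarrow> ev \<phi>2 d = 0" using B2.zero_iff[OF assms(12,16) gd] by simp
    also have "\<dots> \<longleftrightarrow> ev \<phi>2 t = ev \<phi>2 t'" unfolding d_def by simp
    finally show ?thesis .
  qed
  define T where "T z = ev \<phi>2 (SOME t. gens t \<subseteq> E \<times> F \<and> ev \<phi>1 t = z)" for z
  have Tev: "T (ev \<phi>1 t) = ev \<phi>2 t" if "gens t \<subseteq> E \<times> F" for t
  proof -
    have ex: "\<exists>t'. gens t' \<subseteq> E \<times> F \<and> ev \<phi>1 t' = ev \<phi>1 t" using that by blast
    define t' where "t' = (SOME t'. gens t' \<subseteq> E \<times> F \<and> ev \<phi>1 t' = ev \<phi>1 t)"
    have t': "gens t' \<subseteq> E \<times> F \<and> ev \<phi>1 t' = ev \<phi>1 t" unfolding t'_def by (rule someI_ex[OF ex])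
    have "T (ev \<phi>1 t) = ev \<phi>2 t'" unfolding T_def t'_def ..
    also have "\<dots> = ev \<phi>2 t" using transfer[of t' t] t' that by simp
    finally show ?thesis .
  qed
  have hom: "riesz_hom_on S1 T"
    unfolding riesz_hom_on_def S1e
  proof (intro conjI ballI allI)
    fix a b assume "a \<in> {ev \<phi>1 t |t. gens t \<subseteq> E \<times> F}" "b \<in> {ev \<phi>1 t |t. gens t \<subseteq> E \<times> F}"
    then obtain p q where pq: "a = ev \<phi>1 p" "gens p \<subseteq> E \<times> F" "b = ev \<phi>1 q" "gens q \<subseteq> E \<times> F" by blast
    have "T (a + b) = T (ev \<phi>1 (Add p q))" using pq by simp
    also have "\<dots> = ev \<phi>2 (Add p q)" using pq by (intro Tev) simp
    finally show "T (a + b) = T a + T b" using pq Tev by simp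
    have "T (sup a b) = T (ev \<phi>1 (Sup p q))" using pq by simp
    also have "\<dots> = ev \<phi>2 (Sup p q)" using pq by (intro Tev) simp
    finally show "T (sup a b) = sup (T a) (T b)" using pq Tev by simp
  next
    fix c a assume "a \<in> {ev \<phi>1 t |t. gens t \<subseteq> E \<times> F}"
    then obtain p where pq: "a = ev \<phi>1 p" "gens p \<subseteq> E \<times> F" by blast
    have "T (c *\<^sub>R a) = T (ev \<phi>1 (Scl c p))" using pq by simp
    also have "\<dots> = ev \<phi>2 (Scl c p)" using pq by (intro Tev) simp
    finally show "T (c *\<^sub>R a) = c *\<^sub>R T a" using pq Tev by simp
  qed
  have bij: "bij_betw T S1 S2"
    unfolding bij_betw_def
  proof
    show "inj_on T S1"
    proof (rule inj_onI)
      fix a b assume "a \<in> S1" "b \<in> S1" "T a = T b"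
      then obtain p q where pq: "a = ev \<phi>1 p" "gens p \<subseteq> E \<times> F" "b = ev \<phi>1 q" "gens q \<subseteq> E \<times> F"
        unfolding S1e by blast
      with \<open>T a = T b\<close> have "ev \<phi>2 p = ev \<phi>2 q" using Tev by simp
      thus "a = b" using transfer[of p q] pq by simp
    qed
    show "T ` S1 = S2"
    proof
      show "T ` S1 \<subseteq> S2" unfolding S1e S2e using Tev by auto
      show "S2 \<subseteq> T ` S1"
      proof
        fix b assume "b \<in> S2"
        then obtain p where "b = ev \<phi>2 p" "gens p \<subseteq> E \<times> F" unfolding S2e by blast
        hence "b = T (ev \<phi>1 p)" "ev \<phi>1 p \<in> S1" unfolding S1e using Tev by auto
        thus "b \<in> T ` S1" by blast
      qed
    qed
  qed
  have gen: "\<forall>x\<in>E. \<forall>y\<in>F. T (\<phi>1 x y) = \<phi>2 x y"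
    using Tev[of "Gen _ _"] by simp
  have uniq: "\<forall>z\<in>S1. T1 z = T2 z"
    if h: "riesz_iso_on S1 S2 T1" "\<forall>x\<in>E. \<forall>y\<in>F. T1 (\<phi>1 x y) = \<phi>2 x y"
          "riesz_iso_on S1 S2 T2" "\<forall>x\<in>E. \<forall>y\<in>F. T2 (\<phi>1 x y) = \<phi>2 x y" for T1 T2
  proof
    fix z assume "z \<in> S1"
    then obtain t where t: "z = ev \<phi>1 t" "gens t \<subseteq> E \<times> F" unfolding S1e by blast
    have sub: "riesz_subspace S1" unfolding S1_def by (rule riesz_subspace_span)
    have inS: "\<forall>(x, y)\<in>gens t. \<phi>1 x y \<in> S1"
      using t(2) riesz_span_sup unfolding S1_def by fastforce
    have "T1 z = ev (\<lambda>x y. T1 (\<phi>1 x y)) t"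
      using ev_hom[OF sub _ inS] h(1) t unfolding riesz_iso_on_def by blast
    also have "\<dots> = ev (\<lambda>x y. \<phi>2 x y) t" using h(2) t(2) by (intro ev_cong) auto
    also have "\<dots> = ev (\<lambda>x y. T2 (\<phi>1 x y)) t" using h(4) t(2) by (intro ev_cong) auto
    also have "\<dots> = T2 z"
      using ev_hom[OF sub _ inS] h(3) t unfolding riesz_iso_on_def by metis
    finally show "T1 z = T2 z" .
  qed
  show ?thesis
    unfolding S1_def[symmetric] S2_def[symmetric]
    using hom bij gen uniq unfolding riesz_iso_on_def by blast
qed


end
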